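(* Let $\mathcal{A}$ be a nonnegative combinatorially symmetric weakly irreducible tensor of order $m$ and dimension $n$ which is spectral $\ell$-symmetric. Then $\mathbb{P}\mathbb{V}_0(\mathcal{A})$ is isomorphic as a $\mathbb{Z}_m$-module to $\mathbb{P}\mathbb{S}_0(\mathcal{A})$. In particular, if $m$ is a prime, then $\mathbb{P}\mathbb{V}_0(\mathcal{A})$ is a linear space over $\mathbb{Z}_m$, and $\mathbb{P}\mathbb{V}_j(\mathcal{A})$ is an affine space over $\mathbb{Z}_m$ (a coset of $\mathbb{P}\mathbb{V}_0(\mathcal{A})$ in $(\mathbb{P}\mathbb{V},\circ)$) for each $j\in[\ell-1]$.
   Context: Tensors: order $m$, dimension $n$, entries $a_{i_1\cdots i_m}$. Eigenvalue/eigenvector: $\mathcal{A}x^{m-1}=\lambda x^{[m-1]}$, $x\ne0$, where $(\mathcal{A}x^{m-1})_i=\sum a_{ii_2\cdots i_m}x_{i_2}\cdots x_{i_m}$, $x^{[m-1]}=(x_i^{m-1})$. $\mathrm{Spec}(\mathcal{A})$: multiset of roots of the resultant-based characteristic polynomial $\det(\lambda\mathcal{I}-\mathcal{A})$; $\rho(\mathcal{A})$: largest modulus. Spectral $\ell$-symmetric: $\mathrm{Spec}(\mathcal{A})=e^{\mathrm{i}2\pi/\ell}\mathrm{Spec}(\mathcal{A})$. Weakly irreducible: the digraph on $[n]$ with arc $(i,j)$ whenever some $a_{ii_2\cdots i_m}\neq0$ with $j\in\{i_2,\dots,i_m\}$ is strongly connected. Combinatorially symmetric: the support is invariant under permuting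 indices. Known facts: $\rho(\mathcal{A})$ has a positive eigenvector unique up to scaling, and eigenvectors for eigenvalues of modulus $\rho(\mathcal{A})$ have no zero entries. Let $\lambda_j=\rho(\mathcal{A})e^{\mathrm{i}2\pi j/\ell}$; $\mathbb{P}\mathbb{V}_j(\mathcal{A})$ is the set of eigenvectors for $\lambda_j$ normalized with $y_1=1$; $\mathbb{P}\mathbb{V}=\bigcup_{j=0}^{\ell-1}\mathbb{P}\mathbb{V}_j$; $v_p$ the positive element of $\mathbb{P}\mathbb{V}_0$; $D_y=\mathrm{diag}(y_i/|y_i|)$; $y\circ\hat y=D_yD_{\hat y}v_p$. Under the hypotheses $(\mathbb{P}\mathbb{V},\circ)$ is an abelian group with identity $v_p$ in which every element has order dividing $m$, hence a $\mathbb{Z}_m$-module; $\mathbb{P}\mathbb{V}_0$ is a submodule. Incidence matrix $B_{\mathcal{A}}$: rows indexed by $E(\mathcal{A})=\{(i_1,\dots,i_m): a_{i_1\cdots i_m}\ne0,\ i_1\le\dots\le i_m\}$, entries $b_{e,j}=|\{k:i_k=j\}|$, over $\mathbb{Z}_m$. $\mathbb{P}\mathbb{S}_0(\mathcal{A})=\{x\in\mathbb{Z}_m^n: B_{\mathcal{A}}x=0\text{ over }\mathbb{Z}_m,\ x_1=0\}$. *)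

theory Defs
  imports Complex_Main "HOL-Library.Multiset" "HOL-Algebra.Group" "HOL-Computational_Algebra.Primes"
begin

text \<open>Tensors of order m and dimension n are functions on index lists (i_1,...,i_m),
  indices 0-based in {0..<n}. Index 0 plays the role of index 1 of the paper.\<close>

definition tuples :: "nat \<Rightarrow> nat \<Rightarrow> nat list set" where
  "tuples n k = {is. length is = k \<and> set is \<subseteq> {..<n}}"

definition tensor_apply :: "nat \<Rightarrow> nat \<Rightarrow> (nat list \<Rightarrow> real) \<Rightarrow> (nat \<Rightarrow> complex) \<Rightarrow> nat \<Rightarrow> complex" where
  "tensor_apply m n A x i =
     (\<Sum>is\<in>tuples n (m - 1). complex_of_real (A (i # is)) * (\<Prod>k<m - 1. x (is ! k)))"

definition is_eigenpair :: "nat \<Rightarrow> nat \<Rightarrow> (nat list \<Rightarrow> real) \<Rightarrow> complex \<Rightarrow> (nat \<Rightarrow> complex) \<Rightarrow> bool" where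
  "is_eigenpair m n A lam x \<longleftrightarrow>
     (\<exists>i<n. x i \<noteq> 0) \<and> (\<forall>i<n. tensor_apply m n A x i = lam * x i ^ (m - 1))"

definition is_eigenvalue :: "nat \<Rightarrow> nat \<Rightarrow> (nat list \<Rightarrow> real) \<Rightarrow> complex \<Rightarrow> bool" where
  "is_eigenvalue m n A lam \<longleftrightarrow> (\<exists>x. is_eigenpair m n A lam x)"

definition spectral_radius :: "nat \<Rightarrow> nat \<Rightarrow> (nat list \<Rightarrow> real) \<Rightarrow> real" where
  "spectral_radius m n A = Sup {cmod lam | lam. is_eigenvalue m n A lam}"

definition nonneg_tensor :: "nat \<Rightarrow> nat \<Rightarrow> (nat list \<Rightarrow> real) \<Rightarrow> bool" where
  "nonneg_tensor m n A \<longleftrightarrow> (\<forall>is\<in>tuples n m. A is \<ge> 0)"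

definition comb_symmetric :: "nat \<Rightarrow> nat \<Rightarrow> (nat list \<Rightarrow> real) \<Rightarrow> bool" where
  "comb_symmetric m n A \<longleftrightarrow>
     (\<forall>is\<in>tuples n m. \<forall>js. mset js = mset is \<longrightarrow> (A is \<noteq> 0 \<longleftrightarrow> A js \<noteq> 0))"

definition tensor_digraph :: "nat \<Rightarrow> nat \<Rightarrow> (nat list \<Rightarrow> real) \<Rightarrow> (nat \<times> nat) set" where
  "tensor_digraph m n A =
     {(i, j). i < n \<and> j < n \<and> (\<exists>is\<in>tuples n (m - 1). A (i # is) \<noteq> 0 \<and> j \<in> set is)}"

definition weakly_irreducible :: "nat \<Rightarrow> nat \<Rightarrow> (nat list \<Rightarrow> real) \<Rightarrow> bool" where
  "weakly_irreducible m n A \<longleftrightarrow>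
     (\<forall>i<n. \<forall>j<n. (i, j) \<in> (tensor_digraph m n A)\<^sup>*)"

definition spectral_sym :: "nat \<Rightarrow> nat \<Rightarrow> (nat list \<Rightarrow> real) \<Rightarrow> nat \<Rightarrow> bool" where
  "spectral_sym m n A l \<longleftrightarrow>
     (\<forall>lam. is_eigenvalue m n A lam \<longleftrightarrow> is_eigenvalue m n A (cis (2 * pi / real l) * lam))"

definition lam_j :: "nat \<Rightarrow> nat \<Rightarrow> (nat list \<Rightarrow> real) \<Rightarrow> nat \<Rightarrow> nat \<Rightarrow> complex" where
  "lam_j m n A l j = complex_of_real (spectral_radius m n A) * cis (2 * pi * real j / real l)"

definition normalized_eigvecs :: "nat \<Rightarrow> nat \<Rightarrow> (nat list \<Rightarrow> real) \<Rightarrow> complex \<Rightarrow> (nat \<Rightarrow> complex) set" where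
  "normalized_eigvecs m n A lam = {y. is_eigenpair m n A lam y \<and> y 0 = 1 \<and> (\<forall>i\<ge>n. y i = 0)}"

definition PV_j :: "nat \<Rightarrow> nat \<Rightarrow> (nat list \<Rightarrow> real) \<Rightarrow> nat \<Rightarrow> nat \<Rightarrow> (nat \<Rightarrow> complex) set" where
  "PV_j m n A l j = normalized_eigvecs m n A (lam_j m n A l j)"

definition PV :: "nat \<Rightarrow> nat \<Rightarrow> (nat list \<Rightarrow> real) \<Rightarrow> nat \<Rightarrow> (nat \<Rightarrow> complex) set" where
  "PV m n A l = (\<Union>j<l. PV_j m n A l j)"

definition PV0 :: "nat \<Rightarrow> nat \<Rightarrow> (nat list \<Rightarrow> real) \<Rightarrow> (nat \<Rightarrow> complex) set" where
  "PV0 m n A = normalized_eigvecs m n A (complex_of_real (spectral_radius m n A))"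

definition vp :: "nat \<Rightarrow> nat \<Rightarrow> (nat list \<Rightarrow> real) \<Rightarrow> nat \<Rightarrow> complex" where
  "vp m n A = (THE v. v \<in> PV0 m n A \<and> (\<forall>i<n. Im (v i) = 0 \<and> Re (v i) > 0))"

text \<open>y \<circ> z = D_y D_z v_p\<close>
definition pv_comp :: "nat \<Rightarrow> nat \<Rightarrow> (nat list \<Rightarrow> real) \<Rightarrow> (nat \<Rightarrow> complex) \<Rightarrow> (nat \<Rightarrow> complex) \<Rightarrow> nat \<Rightarrow> complex" where
  "pv_comp m n A y z = (\<lambda>i. if i < n
      then (y i / complex_of_real (cmod (y i))) * (z i / complex_of_real (cmod (z i))) * vp m n A i
      else 0)"

definition PV0_group :: "nat \<Rightarrow> nat \<Rightarrow> (nat list \<Rightarrow> real) \<Rightarrow> (nat \<Rightarrow> complex) monoid" where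
  "PV0_group m n A = \<lparr>carrier = PV0 m n A, monoid.mult = pv_comp m n A, monoid.one = vp m n A\<rparr>"

definition edges :: "nat \<Rightarrow> nat \<Rightarrow> (nat list \<Rightarrow> real) \<Rightarrow> nat list set" where
  "edges m n A = {e\<in>tuples n m. sorted e \<and> A e \<noteq> 0}"

definition incidence :: "nat list \<Rightarrow> nat \<Rightarrow> nat" where
  "incidence e j = count (mset e) j"

text \<open>Elements of Z_m^n as functions with values in {0..<m} on {0..<n}, zero elsewhere.\<close>
definition PS0 :: "nat \<Rightarrow> nat \<Rightarrow> (nat list \<Rightarrow> real) \<Rightarrow> (nat \<Rightarrow> nat) set" where
  "PS0 m n A = {x. (\<forall>i<n. x i < m) \<and> (\<forall>i\<ge>n. x i = 0) \<and> x 0 = 0 \<and>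
      (\<forall>e\<in>edges m n A. (\<Sum>j<n. incidence e j * x j) mod m = 0)}"

definition PS0_group :: "nat \<Rightarrow> nat \<Rightarrow> (nat list \<Rightarrow> real) \<Rightarrow> (nat \<Rightarrow> nat) monoid" where
  "PS0_group m n A = \<lparr>carrier = PS0 m n A, monoid.mult = (\<lambda>x y i. (x i + y i) mod m), monoid.one = (\<lambda>i. 0)\<rparr>"

end

theory Submission
  imports Defs "HOL-Analysis.Analysis"
begin


definition TR :: "nat \<Rightarrow> nat \<Rightarrow> (nat list \<Rightarrow> real) \<Rightarrow> (nat \<Rightarrow> real) \<Rightarrow> nat \<Rightarrow> real" where
  "TR m n A x i = (\<Sum>is\<in>tuples n (m - 1). A (i # is) * (\<Prod>k<m - 1. x (is ! k)))"

lemma finite_tuples: "finite (tuples n k)"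
proof -
  have "tuples n k = {xs. set xs \<subseteq> {..<n} \<and> length xs = k}" by (auto simp: tuples_def)
  then show ?thesis using finite_lists_length_eq[of "{..<n}" k] by simp
qed

lemma tuples_nth: "is \<in> tuples n k \<Longrightarrow> j < k \<Longrightarrow> is ! j < n"
  unfolding tuples_def by (auto simp: subset_iff)

lemma prod_strict:
  fixes f g :: "nat \<Rightarrow> real"
  assumes "\<And>k. k < p \<Longrightarrow> 0 \<le> f k \<and> f k \<le> g k" "\<And>k. k < p \<Longrightarrow> 0 < g k"
    and "k0 < p" "f k0 < g k0"
  shows "(\<Prod>k<p. f k) < (\<Prod>k<p. g k)"
proof -
  have f1: "(\<Prod>k<p. f k) = f k0 * (\<Prod>k\<in>{..<p}-{k0}. f k)"
    using assms(3) by (simp add: prod.remove)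
  have g1: "(\<Prod>k<p. g k) = g k0 * (\<Prod>k\<in>{..<p}-{k0}. g k)"
    using assms(3) by (simp add: prod.remove)
  have le: "(\<Prod>k\<in>{..<p}-{k0}. f k) \<le> (\<Prod>k\<in>{..<p}-{k0}. g k)"
    by (rule prod_mono) (use assms(1) in auto)
  have gp: "(\<Prod>k\<in>{..<p}-{k0}. g k) > 0"
    by (rule prod_pos) (use assms(2) in auto)
  have "f k0 * (\<Prod>k\<in>{..<p}-{k0}. f k) \<le> f k0 * (\<Prod>k\<in>{..<p}-{k0}. g k)"
    using le assms(1)[OF assms(3)] by (simp add: mult_left_mono)
  also have "\<dots> < g k0 * (\<Prod>k\<in>{..<p}-{k0}. g k)"
    using gp assms(4) by simp
  finally show ?thesis using f1 g1 by simp
qed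

lemma prod_ge_single:
  fixes f :: "nat \<Rightarrow> real"
  assumes "\<And>k. k < p \<Longrightarrow> mu \<le> f k" "mu > 0" "k0 < p"
  shows "f k0 * mu ^ (p - 1) \<le> (\<Prod>k<p. f k)"
proof -
  have f1: "(\<Prod>k<p. f k) = f k0 * (\<Prod>k\<in>{..<p}-{k0}. f k)"
    using assms(3) by (simp add: prod.remove)
  have "mu ^ (p - 1) = (\<Prod>k\<in>{..<p}-{k0}. mu)" using assms(3) by simp
  also have "\<dots> \<le> (\<Prod>k\<in>{..<p}-{k0}. f k)"
    by (rule prod_mono) (use assms in auto)
  finally have "mu ^ (p - 1) \<le> (\<Prod>k\<in>{..<p}-{k0}. f k)" .
  moreover have "f k0 \<ge> 0" using assms(1)[OF assms(3)] assms(2) by simp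
  ultimately show ?thesis using f1 by (simp add: mult_left_mono)
qed

lemma prod_eq_imp_eq:
  fixes f g :: "nat \<Rightarrow> real"
  assumes "\<And>k. k < p \<Longrightarrow> 0 \<le> f k \<and> f k \<le> g k" "\<And>k. k < p \<Longrightarrow> 0 < g k"
    and "(\<Prod>k<p. f k) = (\<Prod>k<p. g k)" "k0 < p"
  shows "f k0 = g k0"
  using prod_strict[OF assms(1,2) assms(4)] assms by force

locale pf =
  fixes m n :: nat and A :: "nat list \<Rightarrow> real"
  assumes m2: "m \<ge> 2" and n1: "n \<ge> 1"
    and nonneg: "nonneg_tensor m n A"
    and csym: "comb_symmetric m n A"
    and wirr: "weakly_irreducible m n A"
begin

abbreviation "p \<equiv> m - 1"
abbreviation "T \<equiv> TR m n A"
abbreviation "D \<equiv> tensor_digraph m n A"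

lemma p1: "p \<ge> 1" using m2 by simp
lemma m_eq: "m = Suc p" using m2 by simp

lemma cons_tuples: "i < n \<Longrightarrow> is \<in> tuples n p \<Longrightarrow> i # is \<in> tuples n m"
  using m2 by (auto simp: tuples_def)

lemma A_nonneg: "i < n \<Longrightarrow> is \<in> tuples n p \<Longrightarrow> A (i # is) \<ge> 0"
  using nonneg cons_tuples unfolding nonneg_tensor_def by blast

lemma T_cong: "(\<And>i. i < n \<Longrightarrow> x i = y i) \<Longrightarrow> T x j = T y j"
  unfolding TR_def by (intro sum.cong refl arg_cong2[where f="(*)"] prod.cong) (auto intro: tuples_nth)

lemma T_mono: "j < n \<Longrightarrow> (\<And>i. i < n \<Longrightarrow> 0 \<le> x i \<and> x i \<le> y i) \<Longrightarrow> T x j \<le> T y j"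
  unfolding TR_def
  by (intro sum_mono mult_left_mono prod_mono) (auto intro: tuples_nth A_nonneg)

lemma T_nonneg: "j < n \<Longrightarrow> (\<And>i. i < n \<Longrightarrow> 0 \<le> x i) \<Longrightarrow> 0 \<le> T x j"
  unfolding TR_def
  by (intro sum_nonneg mult_nonneg_nonneg prod_nonneg) (auto intro: tuples_nth A_nonneg)

lemma T_scale: "T (\<lambda>i. c * x i) j = c ^ p * T x j"
  unfolding TR_def by (simp add: prod.distrib sum_distrib_left mult_ac)

lemma tensor_apply_cong: "(\<And>i. i < n \<Longrightarrow> x i = y i) \<Longrightarrow> tensor_apply m n A x j = tensor_apply m n A y j"
  unfolding tensor_apply_def by (intro sum.cong refl arg_cong2[where f="(*)"] prod.cong) (auto intro: tuples_nth)

lemma tensor_apply_scale: "tensor_apply m n A (\<lambda>i. c * x i) j = c ^ p * tensor_apply m n A x j"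
  unfolding tensor_apply_def by (simp add: prod.distrib sum_distrib_left mult_ac)

lemma tensor_apply_real: "tensor_apply m n A (\<lambda>i. complex_of_real (x i)) j = complex_of_real (T x j)"
  unfolding tensor_apply_def TR_def by simp

lemma tensor_apply_norm: "j < n \<Longrightarrow> cmod (tensor_apply m n A y j) \<le> T (\<lambda>i. cmod (y i)) j"
  unfolding tensor_apply_def TR_def
  apply (rule order.trans[OF norm_sum])
  apply (rule sum_mono)
  apply (simp add: norm_mult prod_norm[symmetric] abs_of_nonneg A_nonneg)
  done

lemma arc_D: "(i, j) \<in> D \<longleftrightarrow> i < n \<and> j < n \<and> (\<exists>is\<in>tuples n p. A (i # is) \<noteq> 0 \<and> j \<in> set is)"
  unfolding tensor_digraph_def by simp

lemma D_closed:
  assumes "\<And>i j. (i, j) \<in> D \<Longrightarrow> i \<in> M \<Longrightarrow> j \<in> M" "i0 \<in> M" "(i0, j) \<in> D\<^sup>*"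
  shows "j \<in> M"
  using assms(3) by (induction rule: rtrancl_induct) (use assms in blast)+

lemma D_all:
  assumes "\<And>i j. (i, j) \<in> D \<Longrightarrow> i \<in> M \<Longrightarrow> j \<in> M" "i0 \<in> M" "i0 < n" "j < n"
  shows "j \<in> M"
proof -
  have "(i0, j) \<in> D\<^sup>*" using wirr assms(3,4) unfolding weakly_irreducible_def by blast
  then show ?thesis using D_closed[of M i0 j] assms(1,2) by blast
qed

lemma D_cross:
  assumes "(a, b) \<in> D\<^sup>*" "a \<in> I" "b \<notin> I"
  shows "\<exists>c d. (c, d) \<in> D \<and> c \<in> I \<and> d \<notin> I"
  using assms by (induction rule: rtrancl_induct) blast+

end

context pf begin

definition good :: "real \<Rightarrow> nat \<Rightarrow> (nat \<Rightarrow> real) \<Rightarrow> bool" where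
  "good \<beta> i0 y \<longleftrightarrow> (\<forall>i<n. y i > 0) \<and> (\<forall>i<n. y i0 \<le> y i) \<and> (\<forall>i<n. T y i \<le> \<beta> * y i ^ p)"

lemma chain_bound:
  assumes "(i0, j) \<in> D\<^sup>*" "i0 < n" "\<beta> \<ge> 0"
  shows "\<exists>c\<ge>0. \<forall>y. good \<beta> i0 y \<longrightarrow> y j \<le> c * y i0"
  using assms(1)
proof (induction rule: rtrancl_induct)
  case base
  then show ?case by (intro exI[of _ 1]) auto
next
  case (step i j)
  from step.IH obtain c where c: "c \<ge> 0" "\<And>y. good \<beta> i0 y \<Longrightarrow> y i \<le> c * y i0" by blast
  from step.hyps(2) obtain js where i: "i < n" "j < n" and hjs: "js \<in> tuples n p" "A (i # js) \<noteq> 0" "j \<in> set js"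
    unfolding arc_D by blast
  define a where "a = A (i # js)"
  have apos: "a > 0" using A_nonneg[OF i(1) hjs(1)] hjs(2) unfolding a_def by simp
  obtain k0 where k0: "k0 < length js" "js ! k0 = j" using hjs(3) by (auto simp: in_set_conv_nth)
  have len: "length js = p" using hjs(1) by (simp add: tuples_def)
  show ?case
  proof (intro exI[of _ "\<beta> * c ^ p / a"] conjI allI impI)
    show "\<beta> * c ^ p / a \<ge> 0" using c apos assms by simp
    fix y assume g: "good \<beta> i0 y"
    have ypos: "\<And>i. i < n \<Longrightarrow> y i > 0" and ymin: "\<And>i. i < n \<Longrightarrow> y i0 \<le> y i"
      and yT: "\<And>i. i < n \<Longrightarrow> T y i \<le> \<beta> * y i ^ p" using g unfolding good_def by auto
    have mu: "y i0 > 0" using ypos assms(2) by simp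
    have "y j * y i0 ^ (p - 1) \<le> (\<Prod>k<p. y (js ! k))"
      using prod_ge_single[of p "y i0" "\<lambda>k. y (js ! k)" k0] k0 len ymin mu tuples_nth[OF hjs(1)] by auto
    then have "a * (y j * y i0 ^ (p - 1)) \<le> a * (\<Prod>k<p. y (js ! k))"
      using apos by simp
    also have "\<dots> \<le> T y i"
      unfolding TR_def a_def
      by (rule member_le_sum[where f="\<lambda>js. A (i # js) * (\<Prod>k<m - 1. y (js ! k))", OF hjs(1)])
         (auto intro!: mult_nonneg_nonneg prod_nonneg A_nonneg i(1) less_imp_le[OF ypos] tuples_nth finite_tuples)
    also have "\<dots> \<le> \<beta> * y i ^ p" using yT i by simp
    also have "\<dots> \<le> \<beta> * (c * y i0) ^ p"
      using c(2)[OF g] ypos[OF i(1)] assms(3) by (intro mult_left_mono power_mono) auto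
    finally have *: "a * (y j * y i0 ^ (p - 1)) \<le> \<beta> * (c * y i0) ^ p" .
    have "(c * y i0) ^ p = c ^ p * y i0 * y i0 ^ (p - 1)"
      using p1 by (cases p) (auto simp: power_mult_distrib)
    with * have "(a * y j) * y i0 ^ (p - 1) \<le> (\<beta> * c ^ p * y i0) * y i0 ^ (p - 1)"
      by (simp add: mult_ac)
    then have "a * y j \<le> \<beta> * c ^ p * y i0"
      using mu by (simp add: mult_le_cancel_right)
    then show "y j \<le> \<beta> * c ^ p / a * y i0"
      using apos by (simp add: field_simps)
  qed
qed

lemma uniform_bound:
  assumes "\<beta> \<ge> 0"
  shows "\<exists>C\<ge>1. \<forall>i0<n. \<forall>j<n. \<forall>y. good \<beta> i0 y \<longrightarrow> y j \<le> C * y i0"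
proof -
  have "\<forall>ij\<in>{..<n} \<times> {..<n}. \<exists>c\<ge>0. \<forall>y. good \<beta> (fst ij) y \<longrightarrow> y (snd ij) \<le> c * y (fst ij)"
    using chain_bound[OF _ _ assms] wirr unfolding weakly_irreducible_def by auto
  then obtain cf where cf: "\<And>ij. ij \<in> {..<n} \<times> {..<n} \<Longrightarrow> cf ij \<ge> 0 \<and> (\<forall>y. good \<beta> (fst ij) y \<longrightarrow> y (snd ij) \<le> cf ij * y (fst ij))"
    by metis
  define C where "C = 1 + (\<Sum>ij\<in>{..<n} \<times> {..<n}. cf ij)"
  have Cge: "cf ij \<le> C" if "ij \<in> {..<n} \<times> {..<n}" for ij
  proof -
    have "cf ij \<le> (\<Sum>ij\<in>{..<n} \<times> {..<n}. cf ij)"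
      by (rule member_le_sum) (use that cf in auto)
    then show ?thesis unfolding C_def by simp
  qed
  have "C \<ge> 1" unfolding C_def using cf by (simp add: sum_nonneg)
  moreover have "y j \<le> C * y i0" if "i0 < n" "j < n" "good \<beta> i0 y" for i0 j y
  proof -
    have "y j \<le> cf (i0, j) * y i0" using cf[of "(i0, j)"] that by auto
    also have "\<dots> \<le> C * y i0"
      using Cge[of "(i0,j)"] that unfolding good_def by (intro mult_right_mono) auto
    finally show ?thesis .
  qed
  ultimately show ?thesis by blast
qed

end


lemma continuous_on_Max_image:
  fixes f :: "'i \<Rightarrow> 'a::topological_space \<Rightarrow> real"
  assumes "finite I" "I \<noteq> {}" "\<And>i. i \<in> I \<Longrightarrow> continuous_on S (f i)"
  shows "continuous_on S (\<lambda>x. Max ((\<lambda>i. f i x) ` I))"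
  using assms
proof (induction I rule: finite_ne_induct)
  case (singleton x)
  then show ?case by simp
next
  case (insert a F)
  have "continuous_on S (\<lambda>x. max (f a x) (Max ((\<lambda>i. f i x) ` F)))"
    using insert by (intro continuous_on_max) auto
  moreover have "Max ((\<lambda>i. f i x) ` insert a F) = max (f a x) (Max ((\<lambda>i. f i x) ` F))" for x
    using insert by (simp add: Max_insert)
  ultimately show ?case by simp
qed

lemma compact_box:
  "compact (PiE UNIV (\<lambda>i::nat. if i < n then {a..b::real} else {0}))"
proof -
  have "compactin (product_topology (\<lambda>i. euclidean) UNIV) (PiE UNIV (\<lambda>i::nat. if i < n then {a..b::real} else {0}))"
    by (subst compactin_PiE) auto
  then show ?thesis by (simp add: euclidean_product_topology compactin_euclidean_iff)
qed

context pf begin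

lemma T_continuous: "continuous_on S (\<lambda>x. T x i)"
  unfolding TR_def
  by (intro continuous_intros continuous_on_subset[OF continuous_on_product_coordinates]) auto

definition psi :: "(nat \<Rightarrow> real) \<Rightarrow> real" where
  "psi x = Max ((\<lambda>i. T x i / x i ^ p) ` {..<n})"

lemma psi_ge: "i < n \<Longrightarrow> T x i / x i ^ p \<le> psi x"
  unfolding psi_def by (rule Max_ge) auto

lemma psi_in: "\<exists>i<n. psi x = T x i / x i ^ p"
proof -
  have "psi x \<in> (\<lambda>i. T x i / x i ^ p) ` {..<n}"
    unfolding psi_def by (rule Max_in) (use n1 in \<open>auto simp: lessThan_empty_iff\<close>)
  then show ?thesis by auto
qed

lemma psi_le_iff:
  assumes "\<And>i. i < n \<Longrightarrow> x i > 0"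
  shows "psi x \<le> b \<longleftrightarrow> (\<forall>i<n. T x i \<le> b * x i ^ p)"
proof
  assume h: "psi x \<le> b"
  show "\<forall>i<n. T x i \<le> b * x i ^ p"
  proof (intro allI impI)
    fix i assume i: "i < n"
    have "T x i / x i ^ p \<le> b" using psi_ge[OF i, of x] h by linarith
    then show "T x i \<le> b * x i ^ p" using assms[OF i] by (simp add: divide_le_eq)
  qed
next
  assume "\<forall>i<n. T x i \<le> b * x i ^ p"
  then show "psi x \<le> b" using psi_in[of x] assms by (auto simp: divide_le_eq)
qed

lemma psi_lt_iff:
  assumes "\<And>i. i < n \<Longrightarrow> x i > 0"
  shows "psi x < b \<longleftrightarrow> (\<forall>i<n. T x i < b * x i ^ p)"
proof
  assume h: "psi x < b"
  show "\<forall>i<n. T x i < b * x i ^ p"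
  proof (intro allI impI)
    fix i assume i: "i < n"
    have "T x i / x i ^ p < b" using psi_ge[OF i, of x] h by linarith
    then show "T x i < b * x i ^ p" using assms[OF i] by (simp add: divide_less_eq)
  qed
next
  assume "\<forall>i<n. T x i < b * x i ^ p"
  then show "psi x < b" using psi_in[of x] assms by (auto simp: divide_less_eq)
qed

lemma psi_scale:
  assumes "c > 0" "\<And>i. i < n \<Longrightarrow> y i = c * x i"
  shows "psi y = psi x"
proof -
  have "T y i = c ^ p * T x i" for i
    using T_cong[of y "\<lambda>i. c * x i"] assms(2) T_scale by simp
  then have "T y i / y i ^ p = T x i / x i ^ p" if "i < n" for i
    using assms that by (simp add: power_mult_distrib)
  then show ?thesis unfolding psi_def by (intro arg_cong[where f=Max] image_cong) auto
qed

definition ones :: "nat \<Rightarrow> real" where "ones = (\<lambda>i. if i < n then 1 else 0)"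

definition beta0 where "beta0 = psi ones"

lemma beta0_nonneg: "beta0 \<ge> 0"
proof -
  have "0 \<le> T ones 0 / ones 0 ^ p"
    using T_nonneg[of 0 ones] n1 by (auto simp: ones_def)
  also have "\<dots> \<le> beta0" unfolding beta0_def using psi_ge n1 by simp
  finally show ?thesis .
qed

definition CC where "CC = (SOME C. C \<ge> 1 \<and> (\<forall>i0<n. \<forall>j<n. \<forall>y. good beta0 i0 y \<longrightarrow> y j \<le> C * y i0))"

lemma CC: "CC \<ge> 1" "\<And>i0 j y. i0 < n \<Longrightarrow> j < n \<Longrightarrow> good beta0 i0 y \<Longrightarrow> y j \<le> CC * y i0"
  using someI_ex[OF uniform_bound[OF beta0_nonneg]] unfolding CC_def by blast+

definition KK where "KK = PiE UNIV (\<lambda>i::nat. if i < n then {1..CC} else {0})"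

lemma KK_mem: "x \<in> KK \<longleftrightarrow> (\<forall>i<n. 1 \<le> x i \<and> x i \<le> CC) \<and> (\<forall>i\<ge>n. x i = 0)"
proof -
  have "x \<in> KK \<longleftrightarrow> (\<forall>i. x i \<in> (if i < n then {1..CC} else {0}))"
    by (simp add: KK_def PiE_UNIV_domain Pi_iff)
  also have "\<dots> \<longleftrightarrow> (\<forall>i<n. 1 \<le> x i \<and> x i \<le> CC) \<and> (\<forall>i\<ge>n. x i = 0)"
  proof (intro iffI conjI allI impI)
    fix i assume "\<forall>i. x i \<in> (if i < n then {1..CC} else {0})"
    then have h: "x i \<in> (if i < n then {1..CC} else {0})" by blast
    { assume "i < n" then show "1 \<le> x i" "x i \<le> CC" using h by auto }
    { assume "n \<le> i" then show "x i = 0" using h by auto }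
  next
    fix i assume h: "(\<forall>i<n. 1 \<le> x i \<and> x i \<le> CC) \<and> (\<forall>i\<ge>n. x i = 0)"
    show "x i \<in> (if i < n then {1..CC} else {0})"
      using h by (cases "i < n") auto
  qed
  finally show ?thesis .
qed

lemma ones_KK: "ones \<in> KK" using CC unfolding KK_mem ones_def by auto

lemma psi_cont: "continuous_on KK psi"
proof -
  have "continuous_on KK (\<lambda>x. T x i / x i ^ p)" if "i < n" for i
    using that
    apply (intro continuous_intros T_continuous continuous_on_subset[OF continuous_on_product_coordinates])
      apply (auto simp: KK_mem)
    by (metis not_one_le_zero)
  then show ?thesis unfolding psi_def
    by (intro continuous_on_Max_image) (use n1 in \<open>auto simp: lessThan_empty_iff\<close>)
qed

definition xstar where "xstar = (SOME x. x \<in> KK \<and> (\<forall>y\<in>KK. psi x \<le> psi y))"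

lemma xstar: "xstar \<in> KK" "\<And>y. y \<in> KK \<Longrightarrow> psi xstar \<le> psi y"
proof -
  have "\<exists>x\<in>KK. \<forall>y\<in>KK. psi x \<le> psi y"
    by (rule continuous_attains_inf[OF _ _ psi_cont]) (use compact_box ones_KK in \<open>auto simp: KK_def\<close>)
  then show "xstar \<in> KK" "\<And>y. y \<in> KK \<Longrightarrow> psi xstar \<le> psi y"
    using someI_ex[of "\<lambda>x. x \<in> KK \<and> (\<forall>y\<in>KK. psi x \<le> psi y)"] unfolding xstar_def by blast+
qed

definition rstar where "rstar = psi xstar"

lemma rstar_le: "rstar \<le> beta0"
  using xstar(2)[OF ones_KK] unfolding rstar_def beta0_def .

lemma rstar_lower:
  assumes ypos: "\<And>i. i < n \<Longrightarrow> y i > 0"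
  shows "rstar \<le> psi y"
proof (cases "psi y \<le> beta0")
  case False
  then show ?thesis using rstar_le by simp
next
  case True
  define mu where "mu = Min (y ` {..<n})"
  have "mu \<in> y ` {..<n}" unfolding mu_def by (rule Min_in) (use n1 in \<open>auto simp: lessThan_empty_iff\<close>)
  then obtain i0 where i0: "i0 < n" "y i0 = mu" by auto
  have mule: "mu \<le> y i" if "i < n" for i unfolding mu_def by (rule Min_le) (use that in auto)
  have mupos: "mu > 0" using i0 ypos by auto
  have g: "good beta0 i0 y"
    unfolding good_def using ypos mule i0 psi_le_iff[OF ypos] True by auto
  define z where "z = (\<lambda>i. if i < n then y i / mu else 0)"
  have "z \<in> KK" unfolding KK_mem z_def
    using mule mupos CC(2)[OF i0(1) _ g] i0 by (auto simp: field_simps)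
  moreover have "psi z = psi y"
    by (rule psi_scale[of "1/mu"]) (use mupos in \<open>auto simp: z_def\<close>)
  ultimately show ?thesis using xstar(2) unfolding rstar_def by metis
qed

lemma xstar_pos: "i < n \<Longrightarrow> xstar i > 0"
proof -
  assume "i < n"
  then have "1 \<le> xstar i" using xstar(1) unfolding KK_mem by blast
  then show ?thesis by linarith
qed

lemma xstar_sub: "i < n \<Longrightarrow> T xstar i \<le> rstar * xstar i ^ p"
  using psi_le_iff[of xstar rstar] xstar_pos unfolding rstar_def by simp

end

context pf begin

lemma T_strict:
  assumes c: "c < n" and d: "(c, d) \<in> D"
    and y: "\<And>i. i < n \<Longrightarrow> 0 \<le> x i \<and> x i \<le> y i" "\<And>i. i < n \<Longrightarrow> y i > 0"
    and xd: "x d < y d"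
  shows "T x c < T y c"
proof -
  from d obtain js where hjs: "js \<in> tuples n p" "A (c # js) \<noteq> 0" "d \<in> set js"
    unfolding arc_D by blast
  obtain k0 where k0: "k0 < length js" "js ! k0 = d" using hjs(3) by (auto simp: in_set_conv_nth)
  have len: "length js = p" using hjs(1) by (simp add: tuples_def)
  have apos: "A (c # js) > 0" using A_nonneg[OF c hjs(1)] hjs(2) by simp
  show ?thesis unfolding TR_def
  proof (rule sum_strict_mono_ex1[OF finite_tuples])
    show "\<forall>js\<in>tuples n (m - 1). A (c # js) * (\<Prod>k<m - 1. x (js ! k)) \<le> A (c # js) * (\<Prod>k<m - 1. y (js ! k))"
      using y by (auto intro!: mult_left_mono prod_mono A_nonneg c tuples_nth)
    have "(\<Prod>k<p. x (js ! k)) < (\<Prod>k<p. y (js ! k))"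
      by (rule prod_strict[of p _ _ k0]) (use y k0 len xd tuples_nth[OF hjs(1)] in auto)
    then show "\<exists>js\<in>tuples n (m - 1). A (c # js) * (\<Prod>k<m - 1. x (js ! k)) < A (c # js) * (\<Prod>k<m - 1. y (js ! k))"
      using apos by (intro bexI[OF _ hjs(1)] mult_strict_left_mono)
  qed
qed

lemma tight_aux:
  "\<forall>y. card {i. i < n \<and> T y i = rstar * y i ^ p} = k \<longrightarrow> (\<forall>i<n. y i > 0) \<longrightarrow>
     (\<forall>i<n. T y i \<le> rstar * y i ^ p) \<longrightarrow> (\<forall>i<n. T y i = rstar * y i ^ p)"
proof (induction k rule: less_induct)
  case (less k)
  show ?case
  proof (rule allI, intro impI)
    fix y assume card: "card {i. i < n \<and> T y i = rstar * y i ^ p} = k"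
      and ypos: "\<forall>i<n. y i > 0" and sub: "\<forall>i<n. T y i \<le> rstar * y i ^ p"
    define I where "I = {i. i < n \<and> T y i = rstar * y i ^ p}"
    define J where "J = {i. i < n \<and> T y i < rstar * y i ^ p}"
    show "\<forall>i<n. T y i = rstar * y i ^ p"
    proof (rule ccontr)
      assume "\<not> (\<forall>i<n. T y i = rstar * y i ^ p)"
      then obtain d0 where d0: "d0 \<in> J" using sub unfolding J_def by force
      show False
      proof (cases "I = {}")
        case True
        then have "\<forall>i<n. T y i < rstar * y i ^ p" using sub unfolding I_def by force
        then have "psi y < rstar" using psi_lt_iff ypos by auto
        then show False using rstar_lower ypos by force
      next
        case False
        then obtain c0 where c0: "c0 \<in> I" by blast
        have "(c0, d0) \<in> D\<^sup>*" using wirr c0 d0 unfolding weakly_irreducible_def I_def J_def by auto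
        moreover have "d0 \<notin> I" using d0 unfolding I_def J_def by auto
        ultimately obtain c d where cd: "(c, d) \<in> D" "c \<in> I" "d \<notin> I"
          using D_cross c0 by blast
        have dJ: "d \<in> J" using cd sub unfolding I_def J_def arc_D by force
        have finJ: "finite J" unfolding J_def by auto
        have ev: "\<forall>j\<in>J. eventually (\<lambda>\<delta>. \<delta> < y j \<and> T y j < rstar * (y j - \<delta>) ^ p) (at_right (0::real))"
        proof
          fix j assume j: "j \<in> J"
          have "((\<lambda>\<delta>. rstar * (y j - \<delta>) ^ p) \<longlongrightarrow> rstar * (y j - 0) ^ p) (at_right (0::real))"
            by (intro tendsto_intros)
          then have e1: "eventually (\<lambda>\<delta>. T y j < rstar * (y j - \<delta>) ^ p) (at_right (0::real))"
            using j unfolding J_def by (intro order_tendstoD(1)) auto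
          have "((\<lambda>\<delta>. \<delta>) \<longlongrightarrow> 0) (at_right (0::real))" by (intro tendsto_intros)
          then have e2: "eventually (\<lambda>\<delta>. \<delta> < y j) (at_right (0::real))"
            using j ypos unfolding J_def by (intro order_tendstoD(2)) auto
          show "eventually (\<lambda>\<delta>. \<delta> < y j \<and> T y j < rstar * (y j - \<delta>) ^ p) (at_right (0::real))"
            using e1 e2 by eventually_elim auto
        qed
        have "eventually (\<lambda>\<delta>. \<delta> > 0 \<and> (\<forall>j\<in>J. \<delta> < y j \<and> T y j < rstar * (y j - \<delta>) ^ p)) (at_right (0::real))"
          using eventually_ball_finite[OF finJ ev] eventually_at_right_less[of "0::real"]
          by eventually_elim auto
        then obtain \<delta> where del: "\<delta> > 0" "\<And>j. j \<in> J \<Longrightarrow> \<delta> < y j \<and> T y j < rstar * (y j - \<delta>) ^ p"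
          using eventually_happens[of _ "at_right (0::real)"] trivial_limit_at_right_real by blast
        define y' where "y' = (\<lambda>i. if i \<in> J then y i - \<delta> else y i)"
        have y'le: "\<And>i. i < n \<Longrightarrow> 0 \<le> y' i \<and> y' i \<le> y i"
          using del ypos unfolding y'_def by (auto simp: less_imp_le)
        have y'pos: "\<forall>i<n. y' i > 0" using del ypos unfolding y'_def by auto
        have Tle: "\<And>i. i < n \<Longrightarrow> T y' i \<le> T y i" using T_mono y'le by blast
        have sub': "\<forall>i<n. T y' i \<le> rstar * y' i ^ p"
        proof (intro allI impI)
          fix i assume i: "i < n"
          show "T y' i \<le> rstar * y' i ^ p"
          proof (cases "i \<in> J")
            case True
            then show ?thesis using Tle[OF i] del(2)[OF True] unfolding y'_def by auto
          next
            case False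
            then show ?thesis using Tle[OF i] sub i unfolding y'_def by auto
          qed
        qed
        define I' where "I' = {i. i < n \<and> T y' i = rstar * y' i ^ p}"
        have "I' \<subseteq> I"
        proof
          fix i assume "i \<in> I'"
          then have i: "i < n" "T y' i = rstar * y' i ^ p" unfolding I'_def by auto
          show "i \<in> I"
          proof (cases "i \<in> J")
            case True
            then show ?thesis using i Tle[OF i(1)] del(2)[OF True] unfolding y'_def by auto
          next
            case False
            then have "T y i = rstar * y i ^ p" using i sub unfolding J_def by force
            then show ?thesis using i unfolding I_def by auto
          qed
        qed
        moreover have "c \<notin> I'"
        proof
          assume "c \<in> I'"
          have cn: "c < n" using cd(1) unfolding arc_D by auto
          have "c \<notin> J" using cd(2) unfolding I_def J_def by auto
          then have "y' c = y c" unfolding y'_def by simp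
          moreover have "T y' c < T y c"
            by (rule T_strict[OF cn cd(1) y'le]) (use ypos dJ del in \<open>auto simp: y'_def\<close>)
          ultimately show False using \<open>c \<in> I'\<close> cd(2) unfolding I'_def I_def by auto
        qed
        ultimately have "I' \<subset> I" using cd(2) by blast
        moreover have "finite I" unfolding I_def by auto
        ultimately have "card I' < card I" by (intro psubset_card_mono)
        then have "card I' < k" using card unfolding I_def by simp
        from less.IH[OF this] have "\<forall>i<n. T y' i = rstar * y' i ^ p"
          using y'pos sub' unfolding I'_def by blast
        moreover have "T y' d < rstar * y' d ^ p"
          using Tle[of d] del(2)[OF dJ] dJ unfolding y'_def J_def by force
        moreover have "d < n" using dJ unfolding J_def by auto
        ultimately show False by auto
      qed
    qed
  qed
qed

lemma pf_exists:
  "\<exists>v r. r \<ge> 0 \<and> (\<forall>i<n. v i > 0) \<and> (\<forall>i\<ge>n. v i = 0) \<and> v 0 = 1 \<and> (\<forall>i<n. T v i = r * v i ^ p)"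
proof -
  have eig: "\<forall>i<n. T xstar i = rstar * xstar i ^ p"
    using tight_aux xstar_pos xstar_sub by blast
  have r0: "rstar \<ge> 0"
  proof -
    have "0 \<le> T xstar 0 / xstar 0 ^ p" using T_nonneg[of 0 xstar] xstar_pos n1 by force
    also have "\<dots> \<le> rstar" unfolding rstar_def using psi_ge n1 by simp
    finally show ?thesis .
  qed
  have x0: "xstar 0 > 0" using xstar_pos n1 by simp
  define v where "v = (\<lambda>i. if i < n then xstar i / xstar 0 else 0)"
  have "T v i = rstar * v i ^ p" if "i < n" for i
  proof -
    have "T v i = T (\<lambda>i. (1 / xstar 0) * xstar i) i"
      by (rule T_cong) (simp add: v_def)
    also have "\<dots> = (1 / xstar 0) ^ p * T xstar i" by (rule T_scale)
    finally have "T v i = (1 / xstar 0) ^ p * T xstar i" .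
    also have "\<dots> = rstar * v i ^ p" using eig that unfolding v_def by (simp add: power_divide)
    finally show ?thesis .
  qed
  moreover have "\<forall>i<n. v i > 0" using xstar_pos x0 unfolding v_def by auto
  ultimately show ?thesis using r0 n1 x0 by (intro exI[of _ v] exI[of _ rstar]) (auto simp: v_def)
qed

end


definition sg :: "complex \<Rightarrow> complex" where "sg z = z / complex_of_real (cmod z)"

lemma sg_norm: "z \<noteq> 0 \<Longrightarrow> cmod (sg z) = 1"
  unfolding sg_def by (simp add: norm_divide)

lemma sg_decomp: "z = complex_of_real (cmod z) * sg z"
  unfolding sg_def by (cases "z = 0") auto

lemma re1: "cmod z \<le> 1 \<Longrightarrow> Re z = 1 \<Longrightarrow> z = 1"
proof -
  assume a: "cmod z \<le> 1" "Re z = 1"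
  have "cmod z ^ 2 = Re z ^ 2 + Im z ^ 2" by (rule cmod_power2)
  moreover have "cmod z ^ 2 \<le> 1" using a(1) norm_ge_zero[of z] by (simp add: power_le_one)
  ultimately have "Im z ^ 2 \<le> 0" using a(2) by simp
  then have "Im z = 0" by (simp add: power2_eq_square) (meson mult_le_0_iff not_less order_antisym zero_le_mult_iff)
  then show "z = 1" using a(2) by (simp add: complex_eq_iff)
qed

context pf begin

definition vr where "vr = (SOME vr. snd vr \<ge> 0 \<and> (\<forall>i<n. fst vr i > 0) \<and> (\<forall>i\<ge>n. fst vr i = 0) \<and> fst vr 0 = 1 \<and> (\<forall>i<n. T (fst vr) i = snd vr * fst vr i ^ p))"
definition vv where "vv = fst vr"
definition rr where "rr = snd vr"

lemma vv: "rr \<ge> 0" "\<And>i. i < n \<Longrightarrow> vv i > 0" "\<And>i. i \<ge> n \<Longrightarrow> vv i = 0" "vv 0 = 1"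
  "\<And>i. i < n \<Longrightarrow> T vv i = rr * vv i ^ p"
proof -
  have "\<exists>vr. snd vr \<ge> 0 \<and> (\<forall>i<n. fst vr i > 0) \<and> (\<forall>i\<ge>n. fst vr i = 0) \<and> fst vr 0 = 1 \<and> (\<forall>i<n. T (fst vr) i = snd vr * fst vr i ^ p)"
    using pf_exists by auto
  from someI_ex[OF this] show "rr \<ge> 0" "\<And>i. i < n \<Longrightarrow> vv i > 0" "\<And>i. i \<ge> n \<Longrightarrow> vv i = 0" "vv 0 = 1"
  "\<And>i. i < n \<Longrightarrow> T vv i = rr * vv i ^ p" unfolding vv_def rr_def vr_def by auto
qed

lemma T_diff: "T x i - T y i = (\<Sum>js\<in>tuples n p. A (i # js) * ((\<Prod>k<p. x (js ! k)) - (\<Prod>k<p. y (js ! k))))"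
  unfolding TR_def by (simp add: sum_subtractf[symmetric] right_diff_distrib)

lemma rr_zero_A:
  assumes "rr = 0" "i < n" "js \<in> tuples n p"
  shows "A (i # js) = 0"
proof -
  have "(\<Sum>js\<in>tuples n p. A (i # js) * (\<Prod>k<p. vv (js ! k))) = 0"
    using vv(5)[OF assms(2)] assms(1) unfolding TR_def by simp
  then have "A (i # js) * (\<Prod>k<p. vv (js ! k)) = 0"
    using assms(3) by (subst (asm) sum_nonneg_eq_0_iff)
      (auto intro!: mult_nonneg_nonneg prod_nonneg A_nonneg assms(2) less_imp_le[OF vv(2)] tuples_nth finite_tuples)
  moreover have "(\<Prod>k<p. vv (js ! k)) > 0"
    by (intro prod_pos) (simp add: vv(2) tuples_nth[OF assms(3)])
  ultimately show ?thesis by (metis less_irrefl mult_eq_0_iff)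
qed

lemma rr_zero_n:
  assumes "rr = 0" shows "n = 1"
proof (rule ccontr)
  assume "n \<noteq> 1"
  then have "n \<ge> 2" using n1 by simp
  have "D = {}" using rr_zero_A[OF assms] unfolding tensor_digraph_def by auto
  moreover have "(0, 1) \<in> D\<^sup>*" using wirr \<open>n \<ge> 2\<close> unfolding weakly_irreducible_def by auto
  ultimately show False by simp
qed

lemma CW:
  assumes eig: "is_eigenpair m n A lam y"
  shows "cmod lam \<le> rr" "cmod lam = rr \<Longrightarrow> \<exists>t>0. \<forall>i<n. cmod (y i) = t * vv i"
proof -
  define u where "u = (\<lambda>i. cmod (y i))"
  define t where "t = Max ((\<lambda>i. u i / vv i) ` {..<n})"
  from eig obtain i1 where i1: "i1 < n" "y i1 \<noteq> 0" unfolding is_eigenpair_def by blast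
  have eq: "\<And>i. i < n \<Longrightarrow> tensor_apply m n A y i = lam * y i ^ p"
    using eig unfolding is_eigenpair_def by blast
  have tge: "u i / vv i \<le> t" if "i < n" for i unfolding t_def by (rule Max_ge) (use that in auto)
  have "t \<in> (\<lambda>i. u i / vv i) ` {..<n}" unfolding t_def
    by (rule Max_in) (use n1 in \<open>auto simp: lessThan_empty_iff\<close>)
  then obtain i0 where i0: "i0 < n" "t = u i0 / vv i0" by auto
  have tpos: "t > 0"
  proof -
    have "0 < u i1 / vv i1" using i1 vv(2)[OF i1(1)] unfolding u_def by simp
    then show ?thesis using tge[OF i1(1)] by simp
  qed
  have ule: "0 \<le> u i \<and> u i \<le> t * vv i" if "i < n" for i
    using tge[OF that] vv(2)[OF that] unfolding u_def by (simp add: divide_le_eq mult.commute)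
  have ui0: "u i0 = t * vv i0" using i0 vv(2)[OF i0(1)] by simp
  have ui0pos: "u i0 > 0" using ui0 tpos vv(2)[OF i0(1)] by simp
  have key: "cmod lam * u i ^ p \<le> T u i" "T u i \<le> rr * (t * vv i) ^ p" if "i < n" for i
  proof -
    have "cmod lam * u i ^ p = cmod (tensor_apply m n A y i)"
      using eq[OF that] unfolding u_def by (simp add: norm_mult norm_power)
    also have "\<dots> \<le> T u i" unfolding u_def by (rule tensor_apply_norm[OF that])
    finally show "cmod lam * u i ^ p \<le> T u i" .
    have "T u i \<le> T (\<lambda>j. t * vv j) i" by (rule T_mono[OF that ule])
    also have "\<dots> = rr * (t * vv i) ^ p" using T_scale vv(5)[OF that] by (simp add: power_mult_distrib)
    finally show "T u i \<le> rr * (t * vv i) ^ p" .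
  qed
  have "cmod lam * u i0 ^ p \<le> rr * u i0 ^ p" using key[OF i0(1)] ui0 by simp
  then show lr: "cmod lam \<le> rr" using ui0pos by simp
  assume lamr: "cmod lam = rr"
  show "\<exists>t>0. \<forall>i<n. cmod (y i) = t * vv i"
  proof (cases "rr = 0")
    case True
    then have n1': "n = 1" by (rule rr_zero_n)
    show ?thesis
      by (intro exI[of _ "u 0 / vv 0"] conjI)
         (use n1' ui0pos i0 vv(2)[of 0] in \<open>auto simp: u_def\<close>)
  next
    case False
    then have rpos: "rr > 0" using vv(1) by simp
    define M where "M = {i. i < n \<and> u i = t * vv i}"
    have clos: "j \<in> M" if ij: "(i, j) \<in> D" "i \<in> M" for i j
    proof -
      from ij(1) obtain js where i: "i < n" "j < n" and hjs: "js \<in> tuples n p" "A (i # js) \<noteq> 0" "j \<in> set js"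
        unfolding arc_D by blast
      have ui: "u i = t * vv i" using ij(2) unfolding M_def by auto
      have "rr * u i ^ p \<le> T u i" using key(1)[OF i(1)] lamr by simp
      moreover have "T u i \<le> T (\<lambda>j. t * vv j) i" by (rule T_mono[OF i(1) ule])
      moreover have "T (\<lambda>j. t * vv j) i = rr * u i ^ p"
        using T_scale vv(5)[OF i(1)] ui by (simp add: power_mult_distrib)
      ultimately have "T (\<lambda>j. t * vv j) i - T u i = 0" by simp
      then have "(\<Sum>js\<in>tuples n p. A (i # js) * ((\<Prod>k<p. t * vv (js ! k)) - (\<Prod>k<p. u (js ! k)))) = 0"
        by (simp add: T_diff)
      then have "A (i # js) * ((\<Prod>k<p. t * vv (js ! k)) - (\<Prod>k<p. u (js ! k))) = 0"
        using hjs(1)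
        by (subst (asm) sum_nonneg_eq_0_iff)
           (auto intro!: mult_nonneg_nonneg A_nonneg i(1) prod_mono ule tuples_nth finite_tuples)
      then have pe: "(\<Prod>k<p. u (js ! k)) = (\<Prod>k<p. t * vv (js ! k))" using hjs(2) by simp
      obtain k0 where k0: "k0 < length js" "js ! k0 = j" using hjs(3) by (auto simp: in_set_conv_nth)
      have len: "length js = p" using hjs(1) by (simp add: tuples_def)
      have "u j = t * vv j"
        using prod_eq_imp_eq[of p "\<lambda>k. u (js ! k)" "\<lambda>k. t * vv (js ! k)" k0] pe k0 len ule
          tuples_nth[OF hjs(1)] vv(2) tpos by auto
      then show ?thesis using i unfolding M_def by auto
    qed
    have "i0 \<in> M" using i0 ui0 unfolding M_def by auto
    have "j \<in> M" if "j < n" for j using D_all[of M i0 j] clos \<open>i0 \<in> M\<close> i0(1) that by blast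
    then have "\<forall>j<n. j \<in> M" by blast
    then show ?thesis using tpos unfolding M_def u_def by auto
  qed
qed

end

context pf begin

lemma phase:
  assumes eig: "is_eigenpair m n A lam y" and lamr: "cmod lam = rr"
    and ty: "t > 0" "\<forall>i<n. cmod (y i) = t * vv i"
    and i: "i < n" and js: "js \<in> tuples n p" "A (i # js) \<noteq> 0"
  shows "(\<Prod>k<p. sg (y (js ! k))) = (lam / complex_of_real rr) * sg (y i) ^ p"
proof -
  have rpos: "rr > 0" using rr_zero_A[OF _ i js(1)] js(2) vv(1) by force
  define c where "c = lam / complex_of_real rr"
  define d where "d = (\<lambda>j. sg (y j))"
  define e where "e = c * d i ^ p"
  have yne: "y j \<noteq> 0" if "j < n" for j using ty vv(2)[OF that] that by force
  have dn: "cmod (d j) = 1" if "j < n" for j unfolding d_def using sg_norm yne that by blast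
  have cn: "cmod c = 1" using lamr rpos by (simp add: c_def norm_divide)
  have en: "cmod e = 1" by (simp add: e_def norm_mult norm_power dn i cn)
  have ydec: "y j = complex_of_real (t * vv j) * d j" if "j < n" for j
    using sg_decomp[of "y j"] ty that unfolding d_def by simp
  define w where "w = (\<lambda>ks. A (i # ks) * t ^ p * (\<Prod>k<p. vv (ks ! k)))"
  have wnn: "w ks \<ge> 0" if "ks \<in> tuples n p" for ks
    unfolding w_def using ty(1) A_nonneg[OF i that] vv(2) tuples_nth[OF that]
    by (intro mult_nonneg_nonneg prod_nonneg) (auto simp: less_imp_le)
  have wpos: "w js > 0"
    unfolding w_def using ty(1) A_nonneg[OF i js(1)] js(2) vv(2) tuples_nth[OF js(1)]
    by (intro mult_pos_pos prod_pos) auto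
  have ta: "tensor_apply m n A y i = (\<Sum>ks\<in>tuples n p. complex_of_real (w ks) * (\<Prod>k<p. d (ks ! k)))"
    unfolding tensor_apply_def
  proof (rule sum.cong[OF refl])
    fix ks assume ks: "ks \<in> tuples n p"
    have "(\<Prod>k<p. y (ks ! k)) = (\<Prod>k<p. complex_of_real (t * vv (ks ! k)) * d (ks ! k))"
      by (rule prod.cong[OF refl]) (use ydec tuples_nth[OF ks] in auto)
    also have "\<dots> = complex_of_real (t ^ p * (\<Prod>k<p. vv (ks ! k))) * (\<Prod>k<p. d (ks ! k))"
      by (simp add: prod.distrib)
    finally show "complex_of_real (A (i # ks)) * (\<Prod>k<m - 1. y (ks ! k)) =
        complex_of_real (w ks) * (\<Prod>k<p. d (ks ! k))"
      unfolding w_def by (simp add: mult_ac)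
  qed
  have sw: "(\<Sum>ks\<in>tuples n p. w ks) = t ^ p * (rr * vv i ^ p)"
  proof -
    have "(\<Sum>ks\<in>tuples n p. w ks) = t ^ p * (\<Sum>ks\<in>tuples n p. A (i # ks) * (\<Prod>k<p. vv (ks ! k)))"
      unfolding w_def by (simp add: sum_distrib_left mult_ac)
    also have "\<dots> = t ^ p * (rr * vv i ^ p)" using vv(5)[OF i] unfolding TR_def by simp
    finally show ?thesis .
  qed
  have "lam * y i ^ p = lam * complex_of_real (t ^ p * vv i ^ p) * d i ^ p"
    using ydec[OF i] by (simp add: power_mult_distrib)
  also have "\<dots> = e * complex_of_real (\<Sum>ks\<in>tuples n p. w ks)"
    unfolding sw e_def c_def using rpos by (simp add: field_simps)
  finally have "(\<Sum>ks\<in>tuples n p. complex_of_real (w ks) * (\<Prod>k<p. d (ks ! k))) = e * complex_of_real (\<Sum>ks\<in>tuples n p. w ks)"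
    using eig i ta unfolding is_eigenpair_def by simp
  then have "cnj e * (\<Sum>ks\<in>tuples n p. complex_of_real (w ks) * (\<Prod>k<p. d (ks ! k))) = cnj e * e * complex_of_real (\<Sum>ks\<in>tuples n p. w ks)"
    by simp
  moreover have "cnj e * e = 1"
    using complex_norm_square[of e] en by (simp add: mult.commute)
  ultimately have "cnj e * (\<Sum>ks\<in>tuples n p. complex_of_real (w ks) * (\<Prod>k<p. d (ks ! k))) = complex_of_real (\<Sum>ks\<in>tuples n p. w ks)"
    by simp
  moreover have "(\<Sum>ks\<in>tuples n p. complex_of_real (w ks) * (cnj e * (\<Prod>k<p. d (ks ! k)))) = cnj e * (\<Sum>ks\<in>tuples n p. complex_of_real (w ks) * (\<Prod>k<p. d (ks ! k)))"
    by (simp add: sum_distrib_left mult_ac)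
  ultimately have "(\<Sum>ks\<in>tuples n p. complex_of_real (w ks) * (cnj e * (\<Prod>k<p. d (ks ! k)))) = complex_of_real (\<Sum>ks\<in>tuples n p. w ks)"
    by simp
  then have "Re (\<Sum>ks\<in>tuples n p. complex_of_real (w ks) * (cnj e * (\<Prod>k<p. d (ks ! k)))) = (\<Sum>ks\<in>tuples n p. w ks)"
    by simp
  then have "(\<Sum>ks\<in>tuples n p. w ks * Re (cnj e * (\<Prod>k<p. d (ks ! k)))) = (\<Sum>ks\<in>tuples n p. w ks)"
    by (simp add: Re_sum)
  then have "(\<Sum>ks\<in>tuples n p. w ks * (1 - Re (cnj e * (\<Prod>k<p. d (ks ! k))))) = 0"
    by (simp add: right_diff_distrib sum_subtractf)
  moreover have nrm: "cmod (cnj e * (\<Prod>k<p. d (ks ! k))) = 1" if "ks \<in> tuples n p" for ks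
    using en dn tuples_nth[OF that] by (simp add: norm_mult prod_norm[symmetric])
  moreover have "\<forall>ks\<in>tuples n p. 0 \<le> w ks * (1 - Re (cnj e * (\<Prod>k<p. d (ks ! k))))"
  proof
    fix ks assume ks: "ks \<in> tuples n p"
    have "Re (cnj e * (\<Prod>k<p. d (ks ! k))) \<le> 1" using complex_Re_le_cmod nrm[OF ks] by metis
    then show "0 \<le> w ks * (1 - Re (cnj e * (\<Prod>k<p. d (ks ! k))))" using wnn[OF ks] by simp
  qed
  ultimately have "w js * (1 - Re (cnj e * (\<Prod>k<p. d (js ! k)))) = 0"
    using js(1) finite_tuples by (simp add: sum_nonneg_eq_0_iff)
  then have "Re (cnj e * (\<Prod>k<p. d (js ! k))) = 1" using wpos by simp
  then have "cnj e * (\<Prod>k<p. d (js ! k)) = 1" using re1 nrm[OF js(1)] by simp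
  then have h1: "e * (cnj e * (\<Prod>k<p. d (js ! k))) = e" by simp
  have h2: "e * (cnj e * (\<Prod>k<p. d (js ! k))) = (cnj e * e) * (\<Prod>k<p. d (js ! k))"
    by (simp add: mult_ac)
  have "(\<Prod>k<p. d (js ! k)) = e" using h1 h2 \<open>cnj e * e = 1\<close> by (metis mult_1)
  then show ?thesis unfolding e_def c_def d_def .
qed

end

context pf begin

definition vc where "vc = (\<lambda>i. complex_of_real (vv i))"

lemma vc_eig: "is_eigenpair m n A (complex_of_real rr) vc"
  unfolding is_eigenpair_def
proof (intro conjI allI impI)
  show "\<exists>i<n. vc i \<noteq> 0" using n1 vv(4) unfolding vc_def by (intro exI[of _ 0]) auto
  fix i assume i: "i < n"
  show "tensor_apply m n A vc i = complex_of_real rr * vc i ^ p"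
    unfolding vc_def tensor_apply_real using vv(5)[OF i] by simp
qed

lemma spec_rad: "spectral_radius m n A = rr"
  unfolding spectral_radius_def
proof (rule cSup_eq_maximum)
  show "rr \<in> {cmod lam |lam. is_eigenvalue m n A lam}"
    using vc_eig vv(1) unfolding is_eigenvalue_def by (intro CollectI exI[of _ "complex_of_real rr"]) auto
  fix x assume "x \<in> {cmod lam |lam. is_eigenvalue m n A lam}"
  then show "x \<le> rr" using CW(1) unfolding is_eigenvalue_def by auto
qed

lemma PV0_eq: "PV0 m n A = normalized_eigvecs m n A (complex_of_real rr)"
  unfolding PV0_def spec_rad ..

lemma normed:
  assumes "y \<in> normalized_eigvecs m n A lam" "cmod lam = rr"
  shows "\<And>i. i < n \<Longrightarrow> cmod (y i) = vv i"
proof -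
  have eig: "is_eigenpair m n A lam y" and y0: "y 0 = 1" using assms(1) unfolding normalized_eigvecs_def by auto
  obtain t where t: "t > 0" "\<forall>i<n. cmod (y i) = t * vv i" using CW(2)[OF eig assms(2)] by blast
  have "t = 1" using t(2) y0 vv(4) n1 by force
  then show "\<And>i. i < n \<Longrightarrow> cmod (y i) = vv i" using t by simp
qed

lemma normed_phase:
  assumes "y \<in> normalized_eigvecs m n A lam" "cmod lam = rr"
    and "i < n" "js \<in> tuples n p" "A (i # js) \<noteq> 0"
  shows "(\<Prod>k<p. sg (y (js ! k))) = (lam / complex_of_real rr) * sg (y i) ^ p"
proof -
  have eig: "is_eigenpair m n A lam y" using assms(1) unfolding normalized_eigvecs_def by auto
  have "\<forall>i<n. cmod (y i) = 1 * vv i" using normed[OF assms(1,2)] by simp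
  from phase[OF eig assms(2) _ this assms(3-5)] show ?thesis by simp
qed

lemma eig_from_phase:
  assumes wn: "\<And>i. i < n \<Longrightarrow> cmod (w i) = vv i"
    and ph: "\<And>i js. i < n \<Longrightarrow> js \<in> tuples n p \<Longrightarrow> A (i # js) \<noteq> 0 \<Longrightarrow>
       (\<Prod>k<p. sg (w (js ! k))) = c * sg (w i) ^ p"
    and cl: "c * complex_of_real rr = lam"
    and i: "i < n"
  shows "tensor_apply m n A w i = lam * w i ^ p"
proof -
  have wdec: "w j = complex_of_real (vv j) * sg (w j)" if "j < n" for j
    using sg_decomp[of "w j"] wn[OF that] by simp
  have "tensor_apply m n A w i = (\<Sum>js\<in>tuples n p. complex_of_real (A (i # js) * (\<Prod>k<p. vv (js ! k))) * (c * sg (w i) ^ p))"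
    unfolding tensor_apply_def
  proof (rule sum.cong[OF refl])
    fix js assume js: "js \<in> tuples n p"
    have "(\<Prod>k<p. w (js ! k)) = (\<Prod>k<p. complex_of_real (vv (js ! k)) * sg (w (js ! k)))"
      by (rule prod.cong[OF refl]) (use wdec tuples_nth[OF js] in auto)
    also have "\<dots> = complex_of_real (\<Prod>k<p. vv (js ! k)) * (\<Prod>k<p. sg (w (js ! k)))"
      by (simp add: prod.distrib)
    finally have pw: "(\<Prod>k<p. w (js ! k)) = complex_of_real (\<Prod>k<p. vv (js ! k)) * (\<Prod>k<p. sg (w (js ! k)))" .
    show "complex_of_real (A (i # js)) * (\<Prod>k<m - 1. w (js ! k)) =
        complex_of_real (A (i # js) * (\<Prod>k<p. vv (js ! k))) * (c * sg (w i) ^ p)"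
    proof (cases "A (i # js) = 0")
      case True then show ?thesis by simp
    next
      case False
      then show ?thesis using pw ph[OF i js False] by simp
    qed
  qed
  also have "\<dots> = complex_of_real (T vv i) * (c * sg (w i) ^ p)"
    unfolding TR_def by (simp add: sum_distrib_right)
  also have "\<dots> = lam * (complex_of_real (vv i) * sg (w i)) ^ p"
    using vv(5)[OF i] cl[symmetric] by (simp add: power_mult_distrib mult_ac)
  also have "\<dots> = lam * w i ^ p" using wdec[OF i] by simp
  finally show ?thesis .
qed

lemma vp_eq: "vp m n A = vc"
  unfolding vp_def
proof (rule the_equality)
  show "vc \<in> PV0 m n A \<and> (\<forall>i<n. Im (vc i) = 0 \<and> 0 < Re (vc i))"
    unfolding PV0_eq normalized_eigvecs_def using vc_eig vv unfolding vc_def by auto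
  fix w assume w: "w \<in> PV0 m n A \<and> (\<forall>i<n. Im (w i) = 0 \<and> 0 < Re (w i))"
  have wn: "\<And>i. i < n \<Longrightarrow> cmod (w i) = vv i" using normed[of w] w vv(1) unfolding PV0_eq by auto
  show "w = vc"
  proof
    fix i
    show "w i = vc i"
    proof (cases "i < n")
      case True
      have "w i = complex_of_real (Re (w i))" using w True by (simp add: complex_eq_iff)
      moreover have "cmod (w i) = Re (w i)"
      proof -
        have "Im (w i) = 0" "0 < Re (w i)" using w True by auto
        then show ?thesis by (simp add: cmod_eq_Re)
      qed
      ultimately show ?thesis using wn[OF True] unfolding vc_def by simp
    next
      case False
      then show ?thesis using w vv(3) unfolding PV0_eq normalized_eigvecs_def vc_def by auto
    qed
  qed
qed

end


lemma sg_mult_pos: "r > 0 \<Longrightarrow> cmod z = 1 \<Longrightarrow> sg (z * complex_of_real r) = z"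
  unfolding sg_def by (simp add: norm_mult)

lemma prod_list_nth: "length js = q \<Longrightarrow> (\<Prod>k<q. f (js ! k)) = prod_list (map f js)"
  by (simp add: prod.list_conv_set_nth atLeast0LessThan)

lemma sum_list_nth: "length js = q \<Longrightarrow> (\<Sum>k<q. f (js ! k)) = sum_list (map f js)"
  by (simp add: sum_list_sum_nth atLeast0LessThan)

lemma incidence_sum:
  "set e \<subseteq> {..<n} \<Longrightarrow> (\<Sum>j<n. incidence e j * f j) = sum_list (map f e)"
proof (induction e)
  case Nil
  then show ?case by (simp add: incidence_def)
next
  case (Cons a e)
  have "(\<Sum>j<n. incidence (a # e) j * f j) = (\<Sum>j<n. incidence e j * f j + (if j = a then f j else 0))"
    by (rule sum.cong) (auto simp: incidence_def)
  also have "\<dots> = (\<Sum>j<n. incidence e j * f j) + f a"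
    using Cons.prems by (simp add: sum.distrib)
  finally show ?case using Cons by simp
qed

context pf begin

definition om :: "nat \<Rightarrow> complex" where "om k = cis (2 * pi * real k / real m)"

lemma m_pos: "m > 0" using m2 by simp

lemma om_add: "om (a + b) = om a * om b"
  unfolding om_def by (simp add: cis_mult add_divide_distrib distrib_left)

lemma om_0: "om 0 = 1" unfolding om_def by simp

lemma om_m: "om m = 1" unfolding om_def using m_pos by (simp add: complex_eq_iff)

lemma om_mult_m: "om (m * q) = 1"
  by (induction q) (simp_all add: om_0 om_add om_m)

lemma om_mod: "om (k mod m) = om k"
proof -
  have "om k = om (k mod m + m * (k div m))" by (simp only: mod_mult_div_eq)
  also have "\<dots> = om (k mod m)" by (simp only: om_add om_mult_m mult_1_right)
  finally show ?thesis by simp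
qed

lemma om_norm: "cmod (om k) = 1" unfolding om_def by simp

lemma om_ne0: "om k \<noteq> 0" using om_norm[of k] by auto

lemma om_pow: "om k ^ q = om (k * q)"
  by (induction q) (simp_all add: om_0 om_add)

lemma om_prod: "(\<Prod>k<(q::nat). om (f k)) = om (\<Sum>k<q. f k)"
  by (induction q) (simp_all add: om_0 om_add)

lemma om_inj: "a < m \<Longrightarrow> b < m \<Longrightarrow> om a = om b \<Longrightarrow> a = b"
  using Complex.bij_betw_roots_unity[OF m_pos] unfolding bij_betw_def inj_on_def om_def by auto

lemma om_root: "z ^ m = 1 \<Longrightarrow> \<exists>k<m. z = om k"
  using Complex.bij_betw_roots_unity[OF m_pos] unfolding bij_betw_def om_def by auto

lemma om_one: "om k = 1 \<Longrightarrow> k mod m = 0"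
  using om_inj[of "k mod m" 0] om_mod[of k] om_0 m_pos by auto

lemma om_pm: "om (x * p) * om x = 1"
proof -
  have "om (x * p) * om x = om (x * m)" using m_eq by (simp add: om_add[symmetric] algebra_simps)
  then show ?thesis using om_mult_m[of x] by (simp add: mult.commute)
qed

lemma PV0_pow:
  assumes y: "y \<in> PV0 m n A" and i: "i < n"
  shows "sg (y i) ^ m = 1"
proof -
  define d where "d = (\<lambda>j. sg (y j))"
  have ph: "(\<Prod>k<p. d (js ! k)) = d j ^ p" if "j < n" "js \<in> tuples n p" "A (j # js) \<noteq> 0" for j js
  proof -
    have "rr \<noteq> 0" using rr_zero_A that by blast
    then show ?thesis
      using normed_phase[of y "complex_of_real rr" j js] y that vv(1) unfolding PV0_eq d_def by simp
  qed
  have pl: "d j ^ m = prod_mset (image_mset d (mset (j # js)))"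
    if "j < n" "js \<in> tuples n p" "A (j # js) \<noteq> 0" for j js
  proof -
    have len: "length js = p" using that(2) by (simp add: tuples_def)
    have "d j ^ m = d j * d j ^ p" using power_Suc[of "d j" p] m2 by (simp add: Suc_diff_le)
    also have "\<dots> = d j * prod_list (map d js)" using ph[OF that] prod_list_nth[OF len, of d] by simp
    also have "\<dots> = prod_list (map d (j # js))" by simp
    also have "\<dots> = prod_mset (image_mset d (mset (j # js)))"
      by (simp only: mset_map[symmetric] prod_mset_prod_list)
    finally show ?thesis .
  qed
  define M where "M = {j. j < n \<and> d j ^ m = 1}"
  have "0 \<in> M" using y n1 unfolding M_def d_def PV0_def normalized_eigvecs_def sg_def by auto
  moreover have clos: "j \<in> M" if ij: "(a, j) \<in> D" "a \<in> M" for a j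
  proof -
    from ij(1) obtain js where a: "a < n" "j < n" and hjs: "js \<in> tuples n p" "A (a # js) \<noteq> 0" "j \<in> set js"
      unfolding arc_D by blast
    define js' where "js' = a # remove1 j js"
    have ms: "mset (j # js') = mset (a # js)"
      using hjs(3) unfolding js'_def by (simp add: insert_DiffM)
    have js't: "js' \<in> tuples n p"
      using hjs a p1 set_remove1_subset[of j js] unfolding js'_def tuples_def
      by (auto simp: length_remove1)
    have "A (j # js') \<noteq> 0"
      using csym cons_tuples[OF a(1) hjs(1)] ms hjs(2) unfolding comb_symmetric_def by metis
    then have "d j ^ m = prod_mset (image_mset d (mset (j # js')))" by (rule pl[OF a(2) js't])
    also have "\<dots> = prod_mset (image_mset d (mset (a # js)))" by (simp only: ms)
    also have "\<dots> = d a ^ m" by (rule pl[OF a(1) hjs(1,2), symmetric])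
    finally have "d j ^ m = d a ^ m" .
    then show ?thesis using ij(2) a unfolding M_def by simp
  qed
  ultimately have "i \<in> M" using D_all[of M 0 i] i n1 by blast
  then show ?thesis unfolding M_def d_def by simp
qed

end

context pf begin

definition gmap :: "(nat \<Rightarrow> nat) \<Rightarrow> nat \<Rightarrow> complex" where
  "gmap x = (\<lambda>i. if i < n then om (x i) * complex_of_real (vv i) else 0)"

definition hmap :: "(nat \<Rightarrow> complex) \<Rightarrow> nat \<Rightarrow> nat" where
  "hmap y = (\<lambda>i. if i < n then (SOME k. k < m \<and> sg (y i) = om k) else 0)"

lemma gmap_sg: "i < n \<Longrightarrow> sg (gmap x i) = om (x i)"
  unfolding gmap_def using sg_mult_pos[OF vv(2) om_norm] by simp

lemma gmap_norm: assumes "i < n" shows "cmod (gmap x i) = vv i"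
proof -
  have "vv i > 0" using vv(2) assms by blast
  then show ?thesis using assms unfolding gmap_def by (simp add: norm_mult om_norm)
qed

lemma edge_sum:
  assumes "i < n" "js \<in> tuples n p" "A (i # js) \<noteq> 0"
  shows "sort (i # js) \<in> edges m n A"
    and "\<And>f. (\<Sum>j<n. incidence (sort (i # js)) j * f j) = f i + (\<Sum>k<p. f (js ! k))"
proof -
  have t: "i # js \<in> tuples n m" by (rule cons_tuples[OF assms(1,2)])
  have ms: "mset (sort (i # js)) = mset (i # js)" by simp
  have "A (sort (i # js)) \<noteq> 0" using csym t ms assms(3) unfolding comb_symmetric_def by metis
  moreover have "sort (i # js) \<in> tuples n m" using t unfolding tuples_def
    by (metis (mono_tags) mem_Collect_eq length_sort set_sort)
  ultimately show "sort (i # js) \<in> edges m n A" unfolding edges_def using sorted_sort[of "i # js"] by blast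
  fix f :: "nat \<Rightarrow> nat"
  have "incidence (sort (i # js)) = incidence (i # js)" unfolding incidence_def by simp
  then have "(\<Sum>j<n. incidence (sort (i # js)) j * f j) = sum_list (map f (i # js))"
    using incidence_sum[of "i # js" n f] t unfolding tuples_def by simp
  also have "\<dots> = f i + (\<Sum>k<p. f (js ! k))"
    using sum_list_nth[of js p f] assms(2) unfolding tuples_def by simp
  finally show "(\<Sum>j<n. incidence (sort (i # js)) j * f j) = f i + (\<Sum>k<p. f (js ! k))" .
qed

lemma om_cancel: "om a * om b = 1 \<Longrightarrow> om c * om b = 1 \<Longrightarrow> om a = om c"
  by (metis mult.commute mult.left_neutral mult.assoc)

lemma gmap_PV0: assumes x: "x \<in> PS0 m n A" shows "gmap x \<in> PV0 m n A"
proof -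
  have xs: "\<forall>i<n. x i < m" "\<forall>i\<ge>n. x i = 0" "x 0 = 0"
    "\<forall>e\<in>edges m n A. (\<Sum>j<n. incidence e j * x j) mod m = 0"
    using x unfolding PS0_def by auto
  have eig: "tensor_apply m n A (gmap x) i = complex_of_real rr * gmap x i ^ p" if i: "i < n" for i
  proof (rule eig_from_phase[OF gmap_norm _ _ i])
    show "1 * complex_of_real rr = complex_of_real rr" by simp
    fix a js assume a: "a < n" "js \<in> tuples n p" "A (a # js) \<noteq> 0"
    have "(\<Prod>k<p. sg (gmap x (js ! k))) = (\<Prod>k<p. om (x (js ! k)))"
      by (rule prod.cong) (auto simp: gmap_sg tuples_nth[OF a(2)])
    also have "\<dots> = om (\<Sum>k<p. x (js ! k))" by (rule om_prod)
    finally have lhs: "(\<Prod>k<p. sg (gmap x (js ! k))) = om (\<Sum>k<p. x (js ! k))" .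
    have "(x a + (\<Sum>k<p. x (js ! k))) mod m = 0"
      using xs(4) edge_sum[OF a] by metis
    then have "om (x a + (\<Sum>k<p. x (js ! k))) = 1" using om_mod om_0 by metis
    then have "om (\<Sum>k<p. x (js ! k)) * om (x a) = 1" by (simp add: om_add mult.commute)
    then have "om (\<Sum>k<p. x (js ! k)) = om (x a * p)" using om_cancel om_pm by blast
    then show "(\<Prod>k<p. sg (gmap x (js ! k))) = 1 * sg (gmap x a) ^ p"
      using lhs by (simp add: gmap_sg a(1) om_pow)
  qed
  have g0: "gmap x 0 = 1" using xs(3) n1 vv(4) unfolding gmap_def by (simp add: om_0)
  show ?thesis unfolding PV0_eq normalized_eigvecs_def is_eigenpair_def
  proof (intro CollectI conjI allI impI)
    show "\<exists>i<n. gmap x i \<noteq> 0" using g0 n1 by (intro exI[of _ 0]) auto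
    fix i assume "i < n" then show "tensor_apply m n A (gmap x) i = complex_of_real rr * gmap x i ^ p"
      by (rule eig)
  next
    show "gmap x 0 = 1" by (rule g0)
  next
    fix i assume "n \<le> i" then show "gmap x i = 0" by (simp add: gmap_def)
  qed
qed

lemma hmap_prop:
  assumes y: "y \<in> PV0 m n A" and i: "i < n"
  shows "hmap y i < m \<and> sg (y i) = om (hmap y i)"
proof -
  have "\<exists>k. k < m \<and> sg (y i) = om k" using om_root[OF PV0_pow[OF y i]] by blast
  from someI_ex[OF this] show ?thesis unfolding hmap_def using i by simp
qed

lemma PV0_props:
  assumes y: "y \<in> PV0 m n A"
  shows "\<And>i. i < n \<Longrightarrow> cmod (y i) = vv i" "\<And>i. i \<ge> n \<Longrightarrow> y i = 0" "y 0 = 1"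
  using normed[of y "complex_of_real rr"] y vv(1) unfolding PV0_eq normalized_eigvecs_def by auto

lemma hmap_PS0: assumes y: "y \<in> PV0 m n A" shows "hmap y \<in> PS0 m n A"
  unfolding PS0_def
proof (intro CollectI conjI allI impI ballI)
  fix i assume "i < n" then show "hmap y i < m" using hmap_prop[OF y] by blast
next
  fix i assume "n \<le> i" then show "hmap y i = 0" unfolding hmap_def by simp
next
  have "sg (y 0) = 1" using PV0_props(3)[OF y] by (simp add: sg_def)
  then have "om (hmap y 0) = om 0" using hmap_prop[OF y] n1 om_0 by force
  then show "hmap y 0 = 0" using om_inj hmap_prop[OF y] n1 m_pos by force
next
  fix e assume e: "e \<in> edges m n A"
  then have et: "e \<in> tuples n m" "A e \<noteq> 0" unfolding edges_def by auto
  then obtain i js where ij: "e = i # js" using m2 unfolding tuples_def by (cases e) auto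
  have i: "i < n" and js: "js \<in> tuples n p" using et(1) ij unfolding tuples_def by auto
  have A0: "A (i # js) \<noteq> 0" using et ij by simp
  have "rr \<noteq> 0" using rr_zero_A i js A0 by blast
  then have ph: "(\<Prod>k<p. sg (y (js ! k))) = sg (y i) ^ p"
    using normed_phase[of y "complex_of_real rr" i js] y i js A0 vv(1) unfolding PV0_eq by simp
  have "(\<Prod>k<p. sg (y (js ! k))) = (\<Prod>k<p. om (hmap y (js ! k)))"
    by (rule prod.cong) (auto simp: hmap_prop[OF y] tuples_nth[OF js])
  also have "\<dots> = om (\<Sum>k<p. hmap y (js ! k))" by (rule om_prod)
  finally have "om (\<Sum>k<p. hmap y (js ! k)) = om (hmap y i * p)"
    using ph hmap_prop[OF y i] by (simp add: om_pow)
  then have "om (hmap y i + (\<Sum>k<p. hmap y (js ! k))) = 1"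
    using om_pm[of "hmap y i"] by (simp add: om_add mult.commute)
  then have "(hmap y i + (\<Sum>k<p. hmap y (js ! k))) mod m = 0" by (rule om_one)
  moreover have "(\<Sum>j<n. incidence e j * hmap y j) = hmap y i + (\<Sum>k<p. hmap y (js ! k))"
  proof -
    have "sorted e" using e unfolding edges_def by simp
    then have se: "sort (i # js) = e" using ij by (simp only: sorted_sort_id)
    show ?thesis using edge_sum(2)[OF i js A0, of "hmap y"] unfolding se .
  qed
  ultimately show "(\<Sum>j<n. incidence e j * hmap y j) mod m = 0" by simp
qed

lemma gh: assumes y: "y \<in> PV0 m n A" shows "gmap (hmap y) = y"
proof
  fix i show "gmap (hmap y) i = y i"
  proof (cases "i < n")
    case True
    have "y i = complex_of_real (cmod (y i)) * sg (y i)" by (rule sg_decomp)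
    then show ?thesis using True hmap_prop[OF y True] PV0_props(1)[OF y True]
      unfolding gmap_def by (simp add: mult.commute)
  next
    case False
    then show ?thesis using PV0_props(2)[OF y] unfolding gmap_def by simp
  qed
qed

lemma hg_pt: assumes "i < n" "x i < m" shows "hmap (gmap x) i = x i"
  unfolding hmap_def using assms gmap_sg[OF assms(1)]
  by (auto intro!: some_equality om_inj)

lemma hg: assumes x: "x \<in> PS0 m n A" shows "hmap (gmap x) = x"
proof
  fix i show "hmap (gmap x) i = x i"
    using hg_pt[of i x] x unfolding PS0_def by (cases "i < n") (auto simp: hmap_def)
qed

lemma pv_comp_eq:
  assumes a: "a \<in> PV0 m n A" and b: "b \<in> PV0 m n A"
  shows "pv_comp m n A a b = gmap (\<lambda>i. (hmap a i + hmap b i) mod m)"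
proof
  fix i show "pv_comp m n A a b i = gmap (\<lambda>i. (hmap a i + hmap b i) mod m) i"
  proof (cases "i < n")
    case True
    have "pv_comp m n A a b i = sg (a i) * sg (b i) * vc i"
      unfolding pv_comp_def vp_eq sg_def using True by simp
    also have "\<dots> = om ((hmap a i + hmap b i) mod m) * complex_of_real (vv i)"
      using hmap_prop[OF a True] hmap_prop[OF b True] by (simp add: vc_def om_mod om_add)
    finally show ?thesis unfolding gmap_def using True by simp
  next
    case False
    then show ?thesis unfolding pv_comp_def gmap_def by simp
  qed
qed

lemma part1: "PV0_group m n A \<cong> PS0_group m n A"
proof (rule is_isoI, rule isoI)
  show "hmap \<in> hom (PV0_group m n A) (PS0_group m n A)"
  proof (rule homI)
    fix a assume "a \<in> carrier (PV0_group m n A)"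
    then show "hmap a \<in> carrier (PS0_group m n A)" using hmap_PS0 by (simp add: PV0_group_def PS0_group_def)
  next
    fix a b assume "a \<in> carrier (PV0_group m n A)" "b \<in> carrier (PV0_group m n A)"
    then have a: "a \<in> PV0 m n A" and b: "b \<in> PV0 m n A" by (auto simp: PV0_group_def)
    have "hmap (pv_comp m n A a b) = (\<lambda>i. (hmap a i + hmap b i) mod m)"
    proof
      fix i show "hmap (pv_comp m n A a b) i = (hmap a i + hmap b i) mod m"
      proof (cases "i < n")
        case True
        then show ?thesis unfolding pv_comp_eq[OF a b] using m_pos by (intro hg_pt) auto
      next
        case False
        then show ?thesis by (simp add: hmap_def)
      qed
    qed
    then show "hmap (a \<otimes>\<^bsub>PV0_group m n A\<^esub> b) = hmap a \<otimes>\<^bsub>PS0_group m n A\<^esub> hmap b"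
      by (simp add: PV0_group_def PS0_group_def)
  qed
  show "bij_betw hmap (carrier (PV0_group m n A)) (carrier (PS0_group m n A))"
    unfolding PV0_group_def PS0_group_def
    by (rule bij_betw_byWitness[where f'=gmap]) (auto simp: gh hg hmap_PS0 gmap_PV0)
qed

end

context pf begin

lemma PVj_props:
  assumes y: "y \<in> normalized_eigvecs m n A lam" and lr: "cmod lam = rr"
  shows "\<And>i. i < n \<Longrightarrow> cmod (y i) = vv i" "\<And>i. i \<ge> n \<Longrightarrow> y i = 0" "y 0 = 1"
    "\<And>i. i < n \<Longrightarrow> y i \<noteq> 0"
proof -
  show n: "\<And>i. i < n \<Longrightarrow> cmod (y i) = vv i" by (rule normed[OF y lr])
  show "\<And>i. i \<ge> n \<Longrightarrow> y i = 0" "y 0 = 1" using y unfolding normalized_eigvecs_def by auto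
  fix i assume i: "i < n"
  have "cmod (y i) > 0" using n[OF i] vv(2)[OF i] by simp
  then show "y i \<noteq> 0" by auto
qed

lemma sg_cm: "i < n \<Longrightarrow> cmod (y i) = vv i \<Longrightarrow> cmod (sg (y i)) = 1"
proof -
  assume a: "i < n" "cmod (y i) = vv i"
  have "cmod (y i) > 0" using a vv(2)[OF a(1)] by simp
  then have "y i \<noteq> 0" by auto
  then show ?thesis by (rule sg_norm)
qed

lemma sg_cnj: "cmod z = 1 \<Longrightarrow> z * cnj z = 1"
  using complex_norm_square[of z] by simp

lemma coset:
  assumes lr: "cmod lam = rr" and l0: "rr = 0 \<Longrightarrow> lam = 0"
    and y: "y \<in> normalized_eigvecs m n A lam"
  shows "normalized_eigvecs m n A lam = pv_comp m n A y ` PV0 m n A"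
proof -
  define c where "c = lam / complex_of_real rr"
  have cl: "c * complex_of_real rr = lam" using l0 unfolding c_def by (cases "rr = 0") auto
  have cn: "rr \<noteq> 0 \<Longrightarrow> cmod c = 1" using lr vv(1) unfolding c_def by (simp add: norm_divide)
  have yp: "\<And>i. i < n \<Longrightarrow> cmod (y i) = vv i" "\<And>i. i \<ge> n \<Longrightarrow> y i = 0" "y 0 = 1"
    using PVj_props[OF y lr] by auto
  have yph: "(\<Prod>k<p. sg (y (js ! k))) = c * sg (y i) ^ p"
    if "i < n" "js \<in> tuples n p" "A (i # js) \<noteq> 0" for i js
    using normed_phase[OF y lr that] unfolding c_def .
  have ysg: "cmod (sg (y i)) = 1" if "i < n" for i using sg_cm yp(1) that by blast
  have lr0: "cmod (complex_of_real rr) = rr" using vv(1) by simp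
  show ?thesis
  proof (intro equalityI subsetI)
    fix w assume w: "w \<in> normalized_eigvecs m n A lam"
    have wp: "\<And>i. i < n \<Longrightarrow> cmod (w i) = vv i" "\<And>i. i \<ge> n \<Longrightarrow> w i = 0" "w 0 = 1"
      using PVj_props[OF w lr] by auto
    have wph: "(\<Prod>k<p. sg (w (js ! k))) = c * sg (w i) ^ p"
      if "i < n" "js \<in> tuples n p" "A (i # js) \<noteq> 0" for i js
      using normed_phase[OF w lr that] unfolding c_def .
    have wsg: "cmod (sg (w i)) = 1" if "i < n" for i using sg_cm wp(1) that by blast
    define z where "z = (\<lambda>i. if i < n then cnj (sg (y i)) * sg (w i) * complex_of_real (vv i) else 0)"
    have zsg: "sg (z i) = cnj (sg (y i)) * sg (w i)" if "i < n" for i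
      unfolding z_def using that sg_mult_pos[OF vv(2)[OF that], of "cnj (sg (y i)) * sg (w i)"]
        ysg[OF that] wsg[OF that] by (simp add: norm_mult)
    have zn: "cmod (z i) = vv i" if "i < n" for i
      unfolding z_def using that vv(2)[OF that] ysg[OF that] wsg[OF that] by (simp add: norm_mult)
    have zeig: "tensor_apply m n A z i = complex_of_real rr * z i ^ p" if "i < n" for i
    proof (rule eig_from_phase[OF zn _ _ that])
      show "1 * complex_of_real rr = complex_of_real rr" by simp
      fix a js assume a: "a < n" "js \<in> tuples n p" "A (a # js) \<noteq> 0"
      have rne: "rr \<noteq> 0" using rr_zero_A a by blast
      have "(\<Prod>k<p. sg (z (js ! k))) = (\<Prod>k<p. cnj (sg (y (js ! k))) * sg (w (js ! k)))"
        by (rule prod.cong) (auto simp: zsg tuples_nth[OF a(2)])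
      also have "\<dots> = cnj (\<Prod>k<p. sg (y (js ! k))) * (\<Prod>k<p. sg (w (js ! k)))"
        by (simp add: prod.distrib cnj_prod)
      also have "\<dots> = (cnj c * c) * (cnj (sg (y a)) * sg (w a)) ^ p"
        using yph[OF a] wph[OF a] by (simp add: power_mult_distrib mult_ac)
      also have "cnj c * c = 1" using sg_cnj[OF cn[OF rne]] by (simp add: mult.commute)
      finally show "(\<Prod>k<p. sg (z (js ! k))) = 1 * sg (z a) ^ p" using zsg[OF a(1)] by simp
    qed
    have z0: "z 0 = 1" using n1 yp(3) wp(3) vv(4) unfolding z_def by (simp add: sg_def)
    have zPV0: "z \<in> PV0 m n A" unfolding PV0_eq normalized_eigvecs_def is_eigenpair_def
    proof (intro CollectI conjI allI impI)
      show "\<exists>i<n. z i \<noteq> 0" using z0 n1 by (intro exI[of _ 0]) auto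
      fix i assume "i < n" then show "tensor_apply m n A z i = complex_of_real rr * z i ^ p"
        by (rule zeig)
    next
      show "z 0 = 1" by (rule z0)
    next
      fix i assume "n \<le> i" then show "z i = 0" by (simp add: z_def)
    qed
    have "pv_comp m n A y z = w"
    proof
      fix i show "pv_comp m n A y z i = w i"
      proof (cases "i < n")
        case True
        have "pv_comp m n A y z i = sg (y i) * sg (z i) * complex_of_real (vv i)"
          unfolding pv_comp_def vp_eq vc_def sg_def using True by simp
        also have "\<dots> = (sg (y i) * cnj (sg (y i))) * sg (w i) * complex_of_real (vv i)"
          using zsg[OF True] by (simp add: mult_ac)
        also have "\<dots> = complex_of_real (cmod (w i)) * sg (w i)"
          using sg_cnj[OF ysg[OF True]] wp(1)[OF True] by (simp add: mult.commute)
        also have "\<dots> = w i" by (rule sg_decomp[symmetric])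
        finally show ?thesis .
      next
        case False
        then show ?thesis using wp(2) unfolding pv_comp_def by simp
      qed
    qed
    then show "w \<in> pv_comp m n A y ` PV0 m n A" using zPV0 by blast
  next
    fix w assume "w \<in> pv_comp m n A y ` PV0 m n A"
    then obtain z where z: "z \<in> PV0 m n A" and wz: "w = pv_comp m n A y z" by blast
    have zp: "\<And>i. i < n \<Longrightarrow> cmod (z i) = vv i" "\<And>i. i \<ge> n \<Longrightarrow> z i = 0" "z 0 = 1"
      using PV0_props[OF z] by auto
    have zsg: "cmod (sg (z i)) = 1" if "i < n" for i using sg_cm zp(1) that by blast
    have zph: "(\<Prod>k<p. sg (z (js ! k))) = sg (z i) ^ p"
      if "i < n" "js \<in> tuples n p" "A (i # js) \<noteq> 0" for i js
    proof -
      have "rr \<noteq> 0" using rr_zero_A that by blast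
      then show ?thesis
        using normed_phase[of z "complex_of_real rr" i js] z that vv(1) unfolding PV0_eq by simp
    qed
    have wi: "w i = sg (y i) * sg (z i) * complex_of_real (vv i)" if "i < n" for i
      unfolding wz pv_comp_def vp_eq vc_def sg_def using that by simp
    have wsg: "sg (w i) = sg (y i) * sg (z i)" if "i < n" for i
      using wi[OF that] sg_mult_pos[OF vv(2)[OF that], of "sg (y i) * sg (z i)"]
        ysg[OF that] zsg[OF that] by (simp add: norm_mult)
    have wn: "cmod (w i) = vv i" if "i < n" for i
      using wi[OF that] vv(2)[OF that] ysg[OF that] zsg[OF that] by (simp add: norm_mult)
    have weig: "tensor_apply m n A w i = lam * w i ^ p" if "i < n" for i
    proof (rule eig_from_phase[OF wn _ cl that])
      fix a js assume a: "a < n" "js \<in> tuples n p" "A (a # js) \<noteq> 0"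
      have "(\<Prod>k<p. sg (w (js ! k))) = (\<Prod>k<p. sg (y (js ! k)) * sg (z (js ! k)))"
        by (rule prod.cong) (auto simp: wsg tuples_nth[OF a(2)])
      also have "\<dots> = (\<Prod>k<p. sg (y (js ! k))) * (\<Prod>k<p. sg (z (js ! k)))"
        by (simp add: prod.distrib)
      also have "\<dots> = c * (sg (y a) * sg (z a)) ^ p"
        using yph[OF a] zph[OF a] by (simp add: power_mult_distrib mult_ac)
      finally show "(\<Prod>k<p. sg (w (js ! k))) = c * sg (w a) ^ p" using wsg[OF a(1)] by simp
    qed
    have w0: "w 0 = 1" using wi[of 0] n1 yp(3) zp(3) vv(4) by (simp add: sg_def)
    show "w \<in> normalized_eigvecs m n A lam" unfolding normalized_eigvecs_def is_eigenpair_def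
    proof (intro CollectI conjI allI impI)
      show "\<exists>i<n. w i \<noteq> 0" using w0 n1 by (intro exI[of _ 0]) auto
      fix i assume "i < n" then show "tensor_apply m n A w i = lam * w i ^ p" by (rule weig)
    next
      show "w 0 = 1" by (rule w0)
    next
      fix i assume "n \<le> i" then show "w i = 0" unfolding wz pv_comp_def by simp
    qed
  qed
qed

end


theorem theorem3p4:
  fixes m n l :: nat and A :: "nat list \<Rightarrow> real"
  assumes "m \<ge> 2" and "n \<ge> 1" and "l \<ge> 1"
    and "nonneg_tensor m n A"
    and "comb_symmetric m n A"
    and "weakly_irreducible m n A"
    and "spectral_sym m n A l"
  shows "PV0_group m n A \<cong> PS0_group m n A \<and>
    (prime m \<longrightarrow>
      (\<forall>j\<in>{1..<l}. \<exists>y\<in>PV_j m n A l j. PV_j m n A l j = pv_comp m n A y ` PV0 m n A))"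
proof -
  interpret pf m n A using assms by unfold_locales auto
  have P2: "\<forall>j\<in>{1..<l}. \<exists>y\<in>PV_j m n A l j. PV_j m n A l j = pv_comp m n A y ` PV0 m n A"
  proof
    fix j assume "j \<in> {1..<l}"
    define lam where "lam = lam_j m n A l j"
    have laml: "lam = complex_of_real rr * cis (2 * pi * real j / real l)"
      unfolding lam_def lam_j_def spec_rad ..
    have lr: "cmod lam = rr" using vv(1) unfolding laml by (simp add: norm_mult)
    have l0: "rr = 0 \<Longrightarrow> lam = 0" unfolding laml by simp
    have evk: "is_eigenvalue m n A (cis (2 * pi / real l) ^ k * complex_of_real rr)" for k
    proof (induction k)
      case 0
      then show ?case using vc_eig unfolding is_eigenvalue_def by auto
    next
      case (Suc k)
      then have "is_eigenvalue m n A (cis (2 * pi / real l) * (cis (2 * pi / real l) ^ k * complex_of_real rr))"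
        using assms(7) unfolding spectral_sym_def by blast
      then show ?case by (simp add: mult_ac)
    qed
    have "cis (2 * pi / real l) ^ j = cis (2 * pi * real j / real l)"
      by (simp add: Complex.DeMoivre mult_ac)
    then have "is_eigenvalue m n A lam" using evk[of j] unfolding laml by (simp add: mult.commute)
    then obtain x where x: "is_eigenpair m n A lam x" unfolding is_eigenvalue_def by blast
    obtain t where t: "t > 0" "\<forall>i<n. cmod (x i) = t * vv i" using CW(2)[OF x lr] by blast
    have x0: "x 0 \<noteq> 0"
    proof
      assume "x 0 = 0"
      then have "t * vv 0 = 0" using t(2) n1 by force
      then show False using t(1) vv(4) by simp
    qed
    define y where "y = (\<lambda>i. if i < n then x i / x 0 else 0)"
    have yeig: "tensor_apply m n A y i = lam * y i ^ p" if i: "i < n" for i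
    proof -
      have "tensor_apply m n A y i = tensor_apply m n A (\<lambda>i. (1 / x 0) * x i) i"
        by (rule tensor_apply_cong) (simp add: y_def)
      also have "\<dots> = (1 / x 0) ^ p * tensor_apply m n A x i" by (rule tensor_apply_scale)
      also have "\<dots> = (1 / x 0) ^ p * (lam * x i ^ p)" using x i unfolding is_eigenpair_def by simp
      also have "\<dots> = lam * y i ^ p" using i unfolding y_def by (simp add: power_divide)
      finally show ?thesis .
    qed
    have y0: "y 0 = 1" using x0 n1 unfolding y_def by simp
    have yN: "y \<in> normalized_eigvecs m n A lam" unfolding normalized_eigvecs_def is_eigenpair_def
    proof (intro CollectI conjI allI impI)
      show "\<exists>i<n. y i \<noteq> 0" using y0 n1 by (intro exI[of _ 0]) auto
      fix i assume "i < n" then show "tensor_apply m n A y i = lam * y i ^ p" by (rule yeig)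
    next
      show "y 0 = 1" by (rule y0)
    next
      fix i assume "n \<le> i" then show "y i = 0" by (simp add: y_def)
    qed
    have PVj: "PV_j m n A l j = normalized_eigvecs m n A lam" unfolding PV_j_def lam_def ..
    show "\<exists>y\<in>PV_j m n A l j. PV_j m n A l j = pv_comp m n A y ` PV0 m n A"
      using coset[OF lr l0 yN] yN unfolding PVj by blast
  qed
  show ?thesis using part1 P2 by blast
qed


end
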